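(* Let $f:\{0,1\}^n\times\{0,1\}^n\to\{0,1\}$ be a total Boolean function and let $E\subseteq V=\{(z,z):z\in\{0,1\}^n\}$. Let $\kappa_0=|E|$ and $\kappa_1=\sum_{(z,z)\in E}|\hat{f}_{z,z}|$. Then (asymptotically in $n$): if $\kappa_1\ge\Omega(\sqrt{\kappa_0})$, then $BQC(f)=\Omega(\log\kappa_1)$; if $\kappa_1\le O(\sqrt{\kappa_0})$, then \[BQC(f)=\Omega\!\left(\frac{\log\kappa_1}{\log(\sqrt{\kappa_0})-\log\kappa_1+1}\right).\]
   Context: Fourier coefficients of $f:\{0,1\}^n\times\{0,1\}^n\to\mathbb{R}$: $\hat{f}_{z,z'}=2^{-2n}\sum_{x,y}f(x,y)(-1)^{\sum_i x_iz_i+\sum_i y_iz'_i}$. $\log$ is base 2. Quantum communication model (Yao, no prior entanglement): Alice receives $x$, Bob $y$; each holds private qubits initialized to the input and $|0\rangle$; in each round one player applies a unitary to his qubits and sends one qubit; at the end a qubit is measured giving the output; the cost is the number of qubits exchanged. $BQC(f)$ is the minimum cost of a quantum protocol computing $f$ with error probability at most $1/3$ on every input. *)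

theory Defs
  imports Complex_Main
begin

text \<open>Elements of {0,1}^n are bool lists of length n (True = 1).\<close>
definition cube :: "nat \<Rightarrow> bool list set" where
  "cube n = {xs. length xs = n}"

definition fourier :: "nat \<Rightarrow> (bool list \<Rightarrow> bool list \<Rightarrow> bool) \<Rightarrow> bool list \<Rightarrow> bool list \<Rightarrow> real" where
  "fourier n f z z' = (1 / 2 ^ (2 * n)) *
     (\<Sum>x\<in>cube n. \<Sum>y\<in>cube n. (if f x y then 1 else 0) *
        (-1) ^ (card {i. i < n \<and> x ! i \<and> z ! i} + card {i. i < n \<and> y ! i \<and> z' ! i}))"

text \<open>The global system consists of m qubits, numbered 0..m-1; computational
 basis states are bool lists of length m. An operator is given by its matrix
 entries U b b' (row b, column b').\<close>

type_synonym qop = "bool list \<Rightarrow> bool list \<Rightarrow> complex"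

definition unitary_op :: "nat \<Rightarrow> qop \<Rightarrow> bool" where
  "unitary_op m U \<longleftrightarrow> (\<forall>b\<in>cube m. \<forall>b'\<in>cube m.
      (\<Sum>c\<in>cube m. cnj (U c b) * U c b') = (if b = b' then 1 else 0))"

text \<open>U acts only on the qubits in S, i.e. U = L \<otimes> Id on the complement of S.\<close>
definition local_op :: "nat \<Rightarrow> nat set \<Rightarrow> qop \<Rightarrow> bool" where
  "local_op m S U \<longleftrightarrow>
     (\<forall>b\<in>cube m. \<forall>b'\<in>cube m. (\<exists>i<m. i \<notin> S \<and> b ! i \<noteq> b' ! i) \<longrightarrow> U b b' = 0) \<and>
     (\<forall>b\<in>cube m. \<forall>b'\<in>cube m. \<forall>c\<in>cube m. \<forall>c'\<in>cube m.
        (\<forall>i\<in>S. b ! i = c ! i \<and> b' ! i = c' ! i) \<and>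
        (\<forall>i<m. i \<notin> S \<longrightarrow> b ! i = b' ! i \<and> c ! i = c' ! i) \<longrightarrow> U b b' = U c c')"

definition apply_op :: "nat \<Rightarrow> qop \<Rightarrow> (bool list \<Rightarrow> complex) \<Rightarrow> (bool list \<Rightarrow> complex)" where
  "apply_op m U \<psi> = (\<lambda>b. \<Sum>b'\<in>cube m. U b b' * \<psi> b')"

text \<open>A round (p, U, q): if p = True, Alice applies U to the qubits she holds and
 then sends qubit q to Bob; if p = False, Bob does so and sends q to Alice.
 The set A is the set of qubits currently held by Alice; Bob holds {0..<m} - A.\<close>

fun valid_rounds :: "nat \<Rightarrow> nat set \<Rightarrow> (bool \<times> qop \<times> nat) list \<Rightarrow> bool" where
  "valid_rounds m A [] = True"
| "valid_rounds m A ((p, U, q) # rs) =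
     (let S = (if p then A else {0..<m} - A) in
       unitary_op m U \<and> local_op m S U \<and> q \<in> S \<and>
       valid_rounds m (if p then A - {q} else A \<union> {q}) rs)"

fun run_rounds :: "nat \<Rightarrow> (bool \<times> qop \<times> nat) list \<Rightarrow> (bool list \<Rightarrow> complex) \<Rightarrow> (bool list \<Rightarrow> complex)" where
  "run_rounds m [] \<psi> = \<psi>"
| "run_rounds m ((p, U, q) # rs) \<psi> = run_rounds m rs (apply_op m U \<psi>)"

text \<open>Initial state on inputs x, y: qubits 0..n-1 hold x (Alice), qubits n..2n-1
 hold y (Bob), all others are |0>.\<close>
definition init_state :: "nat \<Rightarrow> bool list \<Rightarrow> bool list \<Rightarrow> bool list \<Rightarrow> complex" where
  "init_state m x y = (\<lambda>b. if b = x @ y @ replicate (m - length x - length y) False then 1 else 0)"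

definition meas_prob :: "nat \<Rightarrow> nat \<Rightarrow> (bool list \<Rightarrow> complex) \<Rightarrow> bool \<Rightarrow> real" where
  "meas_prob m out \<psi> v = (\<Sum>b\<in>{b\<in>cube m. b ! out = v}. (cmod (\<psi> b))\<^sup>2)"

definition computes :: "nat \<Rightarrow> (bool list \<Rightarrow> bool list \<Rightarrow> bool) \<Rightarrow>
    nat \<Rightarrow> nat set \<Rightarrow> (bool \<times> qop \<times> nat) list \<Rightarrow> nat \<Rightarrow> bool" where
  "computes n f m A0 rs out \<longleftrightarrow>
     2 * n \<le> m \<and> {0..<n} \<subseteq> A0 \<and> A0 \<subseteq> {0..<m} \<and> A0 \<inter> {n..<2*n} = {} \<and>
     out < m \<and> valid_rounds m A0 rs \<and>
     (\<forall>x\<in>cube n. \<forall>y\<in>cube n.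
        meas_prob m out (run_rounds m rs (init_state m x y)) (f x y) \<ge> 2 / 3)"

definition BQC :: "nat \<Rightarrow> (bool list \<Rightarrow> bool list \<Rightarrow> bool) \<Rightarrow> nat" where
  "BQC n f = (LEAST k. \<exists>m A0 rs out. computes n f m A0 rs out \<and> length rs = k)"

definition kappa0 :: "bool list set \<Rightarrow> real" where
  "kappa0 E = real (card E)"

definition kappa1 :: "nat \<Rightarrow> (bool list \<Rightarrow> bool list \<Rightarrow> bool) \<Rightarrow> bool list set \<Rightarrow> real" where
  "kappa1 n f E = (\<Sum>z\<in>E. \<bar>fourier n f z z\<bar>)"

end

theory Submission
  imports Defs
begin


lemma finite_cube[simp]: "finite (cube n)"
proof -
  have "cube n = {xs. set xs \<subseteq> (UNIV::bool set) \<and> length xs = n}" by (auto simp: cube_def)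
  then show ?thesis using finite_lists_length_eq[of "UNIV::bool set" n] by simp
qed

lemma card_cube: "card (cube n) = 2 ^ n"
proof -
  have "cube n = {xs. set xs \<subseteq> (UNIV::bool set) \<and> length xs = n}" by (auto simp: cube_def)
  then show ?thesis using card_lists_length_eq[of "UNIV::bool set" n] by simp
qed

lemma cube_Suc: "cube (Suc n) = Cons True ` cube n \<union> Cons False ` cube n"
  by (auto simp: cube_def length_Suc_conv)

lemma sum_cube_Suc:
  "(\<Sum>x\<in>cube (Suc n). F x) = (\<Sum>x\<in>cube n. F (True#x)) + (\<Sum>x\<in>cube n. F (False#x))"
proof -
  have "(\<Sum>x\<in>cube (Suc n). F x) = (\<Sum>x\<in>Cons True ` cube n. F x) + (\<Sum>x\<in>Cons False ` cube n. F x)"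
    unfolding cube_Suc by (rule sum.union_disjoint) auto
  also have "\<dots> = (\<Sum>x\<in>cube n. F (True#x)) + (\<Sum>x\<in>cube n. F (False#x))"
    by (simp add: sum.reindex)
  finally show ?thesis .
qed

definition chi :: "nat \<Rightarrow> bool list \<Rightarrow> bool list \<Rightarrow> real" where
  "chi n z x = (-1) ^ card {i. i < n \<and> x ! i \<and> z ! i}"

lemma card_Suc_split: "card {i. i < Suc n \<and> P i} = (if P 0 then 1 else 0) + card {i. i < n \<and> P (Suc i)}"
proof -
  have e: "{i. i < Suc n \<and> P i} = (if P 0 then {0} else {}) \<union> Suc ` {i. i < n \<and> P (Suc i)}"
    by (auto simp: less_Suc_eq_0_disj)
  have "card ((if P 0 then {0} else {}) \<union> Suc ` {i. i < n \<and> P (Suc i)}) =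
        card (if P 0 then {0::nat} else {}) + card (Suc ` {i. i < n \<and> P (Suc i)})"
    by (rule card_Un_disjoint) auto
  then show ?thesis unfolding e by (simp add: card_image)
qed

lemma chi_Cons: "chi (Suc n) (b#z) (a#x) = (if a \<and> b then -1 else 1) * chi n z x"
  unfolding chi_def card_Suc_split by (simp add: power_add)

lemma chi_orth: "z \<in> cube n \<Longrightarrow> w \<in> cube n \<Longrightarrow>
   (\<Sum>x\<in>cube n. chi n z x * chi n w x) = (if z = w then 2 ^ n else 0)"
proof (induction n arbitrary: z w)
  case 0
  then show ?case by (simp add: cube_def chi_def)
next
  case (Suc n)
  obtain b z' where z: "z = b # z'" "z' \<in> cube n" using Suc.prems by (cases z) (auto simp: cube_def)
  obtain c w' where w: "w = c # w'" "w' \<in> cube n" using Suc.prems by (cases w) (auto simp: cube_def)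
  have "(\<Sum>x\<in>cube (Suc n). chi (Suc n) z x * chi (Suc n) w x)
     = ((if b then -1 else 1) * (if c then -1 else 1) + 1) * (\<Sum>x\<in>cube n. chi n z' x * chi n w' x)"
    unfolding sum_cube_Suc z w chi_Cons
    by (simp add: algebra_simps sum_distrib_left sum_negf)
  also have "\<dots> = (if z = w then 2 ^ Suc n else 0)"
    using Suc.IH[OF z(2) w(2)] z w by auto
  finally show ?case .
qed

lemma bessel:
  fixes G :: "'d \<Rightarrow> real" and \<phi> :: "'z \<Rightarrow> 'd \<Rightarrow> real"
  assumes fD: "finite D" and fE: "finite E" and N: "N > 0"
    and orth: "\<And>z w. z \<in> E \<Longrightarrow> w \<in> E \<Longrightarrow> (\<Sum>d\<in>D. \<phi> z d * \<phi> w d) = (if z = w then N else 0)"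
  shows "(\<Sum>z\<in>E. ((\<Sum>d\<in>D. G d * \<phi> z d) / N)\<^sup>2) \<le> (\<Sum>d\<in>D. (G d)\<^sup>2) / N"
proof -
  define c where "c z = (\<Sum>d\<in>D. G d * \<phi> z d) / N" for z
  have cN: "(\<Sum>d\<in>D. G d * \<phi> z d) = N * c z" for z using N by (simp add: c_def)
  have e1: "(\<Sum>d\<in>D. G d * (\<Sum>z\<in>E. c z * \<phi> z d)) = N * (\<Sum>z\<in>E. (c z)\<^sup>2)"
  proof -
    have "(\<Sum>d\<in>D. G d * (\<Sum>z\<in>E. c z * \<phi> z d)) = (\<Sum>z\<in>E. c z * (\<Sum>d\<in>D. G d * \<phi> z d))"
      by (simp add: sum_distrib_left sum.swap[of _ D] algebra_simps)
    also have "\<dots> = N * (\<Sum>z\<in>E. (c z)\<^sup>2)"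
      by (simp add: cN sum_distrib_left power2_eq_square algebra_simps)
    finally show ?thesis .
  qed
  have e2: "(\<Sum>d\<in>D. (\<Sum>z\<in>E. c z * \<phi> z d)\<^sup>2) = N * (\<Sum>z\<in>E. (c z)\<^sup>2)"
  proof -
    have "(\<Sum>d\<in>D. (\<Sum>z\<in>E. c z * \<phi> z d)\<^sup>2)
        = (\<Sum>d\<in>D. \<Sum>z\<in>E. \<Sum>w\<in>E. c z * c w * (\<phi> z d * \<phi> w d))"
      by (simp add: power2_eq_square sum_product algebra_simps)
    also have "\<dots> = (\<Sum>z\<in>E. \<Sum>w\<in>E. c z * c w * (\<Sum>d\<in>D. \<phi> z d * \<phi> w d))"
      by (simp add: sum.swap[of _ D] sum_distrib_left)
    also have "\<dots> = (\<Sum>z\<in>E. \<Sum>w\<in>E. c z * c w * (if z = w then N else 0))"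
      by (intro sum.cong refl) (simp add: orth)
    also have "\<dots> = (\<Sum>z\<in>E. c z * c z * N)"
      using fE by (simp add: if_distrib cong: if_cong)
    also have "\<dots> = N * (\<Sum>z\<in>E. (c z)\<^sup>2)"
      by (simp add: sum_distrib_left power2_eq_square algebra_simps)
    finally show ?thesis .
  qed
  have "0 \<le> (\<Sum>d\<in>D. (G d - (\<Sum>z\<in>E. c z * \<phi> z d))\<^sup>2)" by (simp add: sum_nonneg)
  also have "\<dots> = (\<Sum>d\<in>D. (G d)\<^sup>2) - 2 * (\<Sum>d\<in>D. G d * (\<Sum>z\<in>E. c z * \<phi> z d))
        + (\<Sum>d\<in>D. (\<Sum>z\<in>E. c z * \<phi> z d)\<^sup>2)"
    by (simp add: power2_diff sum.distrib sum_subtractf sum_distrib_left algebra_simps)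
  also have "\<dots> = (\<Sum>d\<in>D. (G d)\<^sup>2) - N * (\<Sum>z\<in>E. (c z)\<^sup>2)" using e1 e2 by simp
  finally have "N * (\<Sum>z\<in>E. (c z)\<^sup>2) \<le> (\<Sum>d\<in>D. (G d)\<^sup>2)" by simp
  then show ?thesis using N unfolding c_def by (simp add: field_simps)
qed

lemma cs_sum:
  fixes a :: "'z \<Rightarrow> real"
  assumes "finite E"
  shows "(\<Sum>z\<in>E. \<bar>a z\<bar>)\<^sup>2 \<le> card E * (\<Sum>z\<in>E. (a z)\<^sup>2)"
proof -
  have "0 \<le> (\<Sum>i\<in>E. \<Sum>j\<in>E. (\<bar>a i\<bar> - \<bar>a j\<bar>)\<^sup>2)" by (simp add: sum_nonneg)
  also have "\<dots> = (\<Sum>i\<in>E. \<Sum>j\<in>E. (a i)\<^sup>2 + (a j)\<^sup>2 - 2 * (\<bar>a i\<bar> * \<bar>a j\<bar>))"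
    by (intro sum.cong refl) (simp add: power2_diff)
  also have "\<dots> = 2 * (card E * (\<Sum>z\<in>E. (a z)\<^sup>2)) - 2 * (\<Sum>z\<in>E. \<bar>a z\<bar>)\<^sup>2"
    by (simp add: sum_subtractf sum.distrib sum_distrib_left power2_eq_square sum_product
        sum_constant algebra_simps)
  finally show ?thesis by simp
qed


definition fo :: "nat \<Rightarrow> (bool list \<Rightarrow> bool list \<Rightarrow> real) \<Rightarrow> bool list \<Rightarrow> real" where
  "fo n F z = (\<Sum>x\<in>cube n. \<Sum>y\<in>cube n. F x y * chi n z x * chi n z y) / 2 ^ (2 * n)"

definition fo1 :: "nat \<Rightarrow> (bool list \<Rightarrow> real) \<Rightarrow> bool list \<Rightarrow> real" where
  "fo1 n A z = (\<Sum>x\<in>cube n. A x * chi n z x) / 2 ^ n"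

lemma fourier_fo: "fourier n f z z = fo n (\<lambda>x y. if f x y then 1 else 0) z"
  unfolding fourier_def fo_def chi_def
  by (simp add: power_add sum_divide_distrib mult.assoc)

lemma fo_cong: "(\<And>x y. x \<in> cube n \<Longrightarrow> y \<in> cube n \<Longrightarrow> F x y = G x y) \<Longrightarrow> fo n F z = fo n G z"
  unfolding fo_def by (intro arg_cong[where f="\<lambda>t. t / _"] sum.cong refl) auto

lemma fo_diff: "fo n (\<lambda>x y. F x y - G x y) z = fo n F z - fo n G z"
  unfolding fo_def by (simp add: sum_subtractf algebra_simps diff_divide_distrib)

lemma fo_sum_list: "fo n (\<lambda>x y. \<Sum>t\<leftarrow>L. h t x y) z = (\<Sum>t\<leftarrow>L. fo n (h t) z)"
proof (induction L)
  case Nil then show ?case by (simp add: fo_def)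
next
  case (Cons a L)
  have "fo n (\<lambda>x y. \<Sum>t\<leftarrow>a#L. h t x y) z = fo n (h a) z + fo n (\<lambda>x y. \<Sum>t\<leftarrow>L. h t x y) z"
    unfolding fo_def by (simp add: sum.distrib algebra_simps add_divide_distrib)
  then show ?case using Cons by simp
qed

lemma fo_prod: "fo n (\<lambda>x y. w * A x * B y) z = w * fo1 n A z * fo1 n B z"
proof -
  have p: "(2::real) ^ (2 * n) = 2 ^ n * 2 ^ n" by (simp add: power_add[symmetric] mult_2)
  show ?thesis unfolding fo_def fo1_def p
    by (simp add: sum_product sum_distrib_left algebra_simps)
qed

lemma bessel1:
  assumes "E \<subseteq> cube n"
  shows "(\<Sum>z\<in>E. (fo1 n A z)\<^sup>2) \<le> (\<Sum>x\<in>cube n. (A x)\<^sup>2) / 2 ^ n"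
proof -
  have fE: "finite E" using finite_subset[OF assms(1) finite_cube] .
  have orth: "(\<Sum>x\<in>cube n. chi n z x * chi n w x) = (if z = w then 2 ^ n else 0)"
    if "z \<in> E" "w \<in> E" for z w using chi_orth[of z n w] that assms by blast
  show ?thesis unfolding fo1_def
    by (rule bessel[OF finite_cube fE]) (use orth in auto)
qed

lemma bessel1_bound:
  assumes "E \<subseteq> cube n" "\<And>x. x \<in> cube n \<Longrightarrow> \<bar>A x\<bar> \<le> 1"
  shows "(\<Sum>z\<in>E. (fo1 n A z)\<^sup>2) \<le> 1"
proof -
  have "(\<Sum>x\<in>cube n. (A x)\<^sup>2) \<le> (\<Sum>x\<in>cube n. 1)"
    by (intro sum_mono) (use assms(2) in \<open>auto simp: abs_square_le_1\<close>)
  also have "\<dots> = 2 ^ n" by (simp add: card_cube)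
  finally have h: "(\<Sum>x\<in>cube n. (A x)\<^sup>2) \<le> 2 ^ n" .
  have "(\<Sum>x\<in>cube n. (A x)\<^sup>2) / 2 ^ n \<le> 1" using h by (subst pos_divide_le_eq) auto
  then show ?thesis using bessel1[OF assms(1), of A] by linarith
qed

lemma bessel2:
  assumes "E \<subseteq> cube n"
  shows "(\<Sum>z\<in>E. (fo n F z)\<^sup>2) \<le> (\<Sum>p\<in>cube n \<times> cube n. (F (fst p) (snd p))\<^sup>2) / 2 ^ (2 * n)"
proof -
  have fE: "finite E" using finite_subset[OF assms(1) finite_cube] .
  have fo': "fo n F z = (\<Sum>p\<in>cube n \<times> cube n. F (fst p) (snd p) * (chi n z (fst p) * chi n z (snd p))) / 2 ^ (2*n)" for z
    unfolding fo_def by (simp add: sum.cartesian_product split_def algebra_simps)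
  have orth: "(\<Sum>p\<in>cube n \<times> cube n. (chi n z (fst p) * chi n z (snd p)) * (chi n w (fst p) * chi n w (snd p)))
      = (if z = w then 2 ^ (2 * n) else 0)" if "z \<in> E" "w \<in> E" for z w
  proof -
    have "(\<Sum>p\<in>cube n \<times> cube n. (chi n z (fst p) * chi n z (snd p)) * (chi n w (fst p) * chi n w (snd p)))
       = (\<Sum>x\<in>cube n. chi n z x * chi n w x) * (\<Sum>y\<in>cube n. chi n z y * chi n w y)"
      by (simp add: sum.cartesian_product split_def sum_product algebra_simps)
    also have "\<dots> = (if z = w then 2 ^ (2 * n) else 0)"
      using chi_orth[of z n w] that assms by (auto simp: power_add mult_2 subset_iff)
    finally show ?thesis .
  qed
  show ?thesis unfolding fo'
    by (rule bessel[OF _ fE]) (use orth in auto)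
qed

lemma err_fourier:
  assumes "E \<subseteq> cube n" "0 \<le> e" "\<And>x y. x \<in> cube n \<Longrightarrow> y \<in> cube n \<Longrightarrow> \<bar>G x y\<bar> \<le> e"
  shows "(\<Sum>z\<in>E. \<bar>fo n G z\<bar>) \<le> e * sqrt (card E)"
proof -
  have fE: "finite E" using finite_subset[OF assms(1) finite_cube] .
  have "(\<Sum>p\<in>cube n \<times> cube n. (G (fst p) (snd p))\<^sup>2) \<le> (\<Sum>p\<in>cube n \<times> cube n. e\<^sup>2)"
    by (intro sum_mono) (use assms(2,3) in \<open>auto simp: abs_le_square_iff[symmetric]\<close>)
  also have "\<dots> = 2 ^ (2 * n) * e\<^sup>2" by (simp add: card_cube card_cartesian_product power_add mult_2)
  finally have h: "(\<Sum>p\<in>cube n \<times> cube n. (G (fst p) (snd p))\<^sup>2) \<le> 2 ^ (2 * n) * e\<^sup>2" .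
  have "(\<Sum>p\<in>cube n \<times> cube n. (G (fst p) (snd p))\<^sup>2) / 2 ^ (2 * n) \<le> e\<^sup>2"
    using h by (subst pos_divide_le_eq) (auto simp: mult.commute)
  then have s2: "(\<Sum>z\<in>E. (fo n G z)\<^sup>2) \<le> e\<^sup>2"
    using bessel2[OF assms(1), of G] by linarith
  have "(\<Sum>z\<in>E. \<bar>fo n G z\<bar>)\<^sup>2 \<le> card E * (\<Sum>z\<in>E. (fo n G z)\<^sup>2)" by (rule cs_sum[OF fE])
  also have "\<dots> \<le> card E * e\<^sup>2" using s2 by (intro mult_left_mono) auto
  also have "\<dots> = (e * sqrt (card E))\<^sup>2" by (simp add: power_mult_distrib)
  finally show ?thesis
    by (rule power2_le_imp_le) (use assms(2) in simp)
qed

definition dec :: "nat \<Rightarrow> real \<Rightarrow> (bool list \<Rightarrow> bool list \<Rightarrow> real) \<Rightarrow> bool" where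
  "dec n W F \<longleftrightarrow> (\<exists>L :: (real \<times> (bool list \<Rightarrow> real) \<times> (bool list \<Rightarrow> real)) list.
     (\<Sum>t\<leftarrow>L. \<bar>fst t\<bar>) \<le> W \<and>
     (\<forall>t\<in>set L. \<forall>x\<in>cube n. \<bar>fst (snd t) x\<bar> \<le> 1 \<and> \<bar>snd (snd t) x\<bar> \<le> 1) \<and>
     (\<forall>x\<in>cube n. \<forall>y\<in>cube n. F x y = (\<Sum>t\<leftarrow>L. fst t * fst (snd t) x * snd (snd t) y)))"

lemma sum_list_swap_sum: "(\<Sum>z\<in>E. \<Sum>t\<leftarrow>L. h t z) = (\<Sum>t\<leftarrow>L. \<Sum>z\<in>E. h t z)"
  by (induction L) (auto simp: sum.distrib)

lemma sum_list_mono': "(\<And>t. t \<in> set L \<Longrightarrow> f t \<le> (g t :: real)) \<Longrightarrow> (\<Sum>t\<leftarrow>L. f t) \<le> (\<Sum>t\<leftarrow>L. g t)"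
  by (induction L) (auto intro: add_mono)

lemma sum_list_abs_le: "\<bar>\<Sum>t\<leftarrow>L. f t\<bar> \<le> (\<Sum>t\<leftarrow>L. \<bar>f t :: real\<bar>)"
  by (induction L) (auto intro: order_trans[OF abs_triangle_ineq])

lemma dec_fourier:
  assumes "dec n W F" "E \<subseteq> cube n"
  shows "(\<Sum>z\<in>E. \<bar>fo n F z\<bar>) \<le> W"
proof -
  obtain L where L1: "(\<Sum>t\<leftarrow>L. \<bar>fst t\<bar>) \<le> W"
    and L2: "\<forall>t\<in>set L. \<forall>x\<in>cube n. \<bar>fst (snd t) x\<bar> \<le> 1 \<and> \<bar>snd (snd t) x\<bar> \<le> 1"
    and L3: "\<forall>x\<in>cube n. \<forall>y\<in>cube n. F x y = (\<Sum>t\<leftarrow>L. fst t * fst (snd t) x * snd (snd t) y)"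
    using assms(1) unfolding dec_def by blast
  have fz: "fo n F z = (\<Sum>t\<leftarrow>L. fst t * fo1 n (fst (snd t)) z * fo1 n (snd (snd t)) z)" for z
  proof -
    have "fo n F z = fo n (\<lambda>x y. \<Sum>t\<leftarrow>L. fst t * fst (snd t) x * snd (snd t) y) z"
      by (rule fo_cong) (use L3 in auto)
    also have "\<dots> = (\<Sum>t\<leftarrow>L. fst t * fo1 n (fst (snd t)) z * fo1 n (snd (snd t)) z)"
      by (simp add: fo_sum_list fo_prod)
    finally show ?thesis .
  qed
  have "(\<Sum>z\<in>E. \<bar>fo n F z\<bar>) \<le> (\<Sum>z\<in>E. \<Sum>t\<leftarrow>L. \<bar>fst t\<bar> * (\<bar>fo1 n (fst (snd t)) z\<bar> * \<bar>fo1 n (snd (snd t)) z\<bar>))"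
    unfolding fz by (intro sum_mono order_trans[OF sum_list_abs_le]) (simp add: abs_mult mult.assoc)
  also have "\<dots> = (\<Sum>t\<leftarrow>L. \<bar>fst t\<bar> * (\<Sum>z\<in>E. \<bar>fo1 n (fst (snd t)) z\<bar> * \<bar>fo1 n (snd (snd t)) z\<bar>))"
    by (simp add: sum_list_swap_sum sum_distrib_left)
  also have "\<dots> \<le> (\<Sum>t\<leftarrow>L. \<bar>fst t\<bar> * 1)"
  proof (rule sum_list_mono', rule mult_left_mono)
    fix t assume t: "t \<in> set L"
    have "(\<Sum>z\<in>E. \<bar>fo1 n (fst (snd t)) z\<bar> * \<bar>fo1 n (snd (snd t)) z\<bar>)
        \<le> (\<Sum>z\<in>E. ((fo1 n (fst (snd t)) z)\<^sup>2 + (fo1 n (snd (snd t)) z)\<^sup>2) / 2)"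
    proof (rule sum_mono)
      fix z
      have "0 \<le> (\<bar>fo1 n (fst (snd t)) z\<bar> - \<bar>fo1 n (snd (snd t)) z\<bar>)\<^sup>2" by simp
      then show "\<bar>fo1 n (fst (snd t)) z\<bar> * \<bar>fo1 n (snd (snd t)) z\<bar>
          \<le> ((fo1 n (fst (snd t)) z)\<^sup>2 + (fo1 n (snd (snd t)) z)\<^sup>2) / 2"
        by (simp add: power2_diff)
    qed
    also have "\<dots> = ((\<Sum>z\<in>E. (fo1 n (fst (snd t)) z)\<^sup>2) + (\<Sum>z\<in>E. (fo1 n (snd (snd t)) z)\<^sup>2)) / 2"
      by (simp only: sum_divide_distrib[symmetric] sum.distrib)
    also have "\<dots> \<le> (1 + 1) / 2"
      using bessel1_bound[OF assms(2), of "fst (snd t)"] bessel1_bound[OF assms(2), of "snd (snd t)"] L2 t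
      by (intro divide_right_mono add_mono) auto
    finally show "(\<Sum>z\<in>E. \<bar>fo1 n (fst (snd t)) z\<bar> * \<bar>fo1 n (snd (snd t)) z\<bar>) \<le> 1" by simp
  qed simp
  also have "\<dots> \<le> W" using L1 by simp
  finally show ?thesis .
qed


lemma sum_list_abs_nonneg: "0 \<le> (\<Sum>t\<leftarrow>L. \<bar>f t\<bar> :: real)"
  by (induction L) auto

lemma dec_nonneg: "dec n W F \<Longrightarrow> 0 \<le> W"
  unfolding dec_def using sum_list_abs_nonneg order_trans by blast

lemma dec_cong:
  assumes "dec n W F" "\<And>x y. x \<in> cube n \<Longrightarrow> y \<in> cube n \<Longrightarrow> F x y = G x y"
  shows "dec n W G"
proof -
  obtain L where L: "(\<Sum>t\<leftarrow>L. \<bar>fst t\<bar>) \<le> W"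
    "\<forall>t\<in>set L. \<forall>x\<in>cube n. \<bar>fst (snd t) x\<bar> \<le> 1 \<and> \<bar>snd (snd t) x\<bar> \<le> 1"
    "\<forall>x\<in>cube n. \<forall>y\<in>cube n. F x y = (\<Sum>t\<leftarrow>L. fst t * fst (snd t) x * snd (snd t) y)"
    using assms(1) unfolding dec_def by blast
  show ?thesis unfolding dec_def by (rule exI[of _ L]) (use L assms(2) in auto)
qed

lemma dec_mono: "dec n W F \<Longrightarrow> W \<le> W' \<Longrightarrow> dec n W' F"
  unfolding dec_def using order_trans by blast

lemma dec_term:
  assumes "\<And>x. x \<in> cube n \<Longrightarrow> \<bar>A x\<bar> \<le> 1" "\<And>y. y \<in> cube n \<Longrightarrow> \<bar>B y\<bar> \<le> 1"
  shows "dec n \<bar>w\<bar> (\<lambda>x y. w * A x * B y)"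
  unfolding dec_def by (rule exI[of _ "[(w, A, B)]"]) (use assms in auto)

lemma dec_const: "dec n \<bar>c\<bar> (\<lambda>x y. c)"
  using dec_term[of n "\<lambda>_. 1" "\<lambda>_. 1" c] by simp

lemma dec_zero: "dec n 0 (\<lambda>x y. 0)"
  unfolding dec_def by (rule exI[of _ "[]"]) auto

lemma dec_add: "dec n W1 F \<Longrightarrow> dec n W2 G \<Longrightarrow> dec n (W1 + W2) (\<lambda>x y. F x y + G x y)"
  unfolding dec_def
proof (elim exE conjE)
  fix L1 L2 :: "(real \<times> (bool list \<Rightarrow> real) \<times> (bool list \<Rightarrow> real)) list"
  assume a: "(\<Sum>t\<leftarrow>L1. \<bar>fst t\<bar>) \<le> W1" "\<forall>t\<in>set L1. \<forall>x\<in>cube n. \<bar>fst (snd t) x\<bar> \<le> 1 \<and> \<bar>snd (snd t) x\<bar> \<le> 1"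
     "\<forall>x\<in>cube n. \<forall>y\<in>cube n. F x y = (\<Sum>t\<leftarrow>L1. fst t * fst (snd t) x * snd (snd t) y)"
   and b: "(\<Sum>t\<leftarrow>L2. \<bar>fst t\<bar>) \<le> W2" "\<forall>t\<in>set L2. \<forall>x\<in>cube n. \<bar>fst (snd t) x\<bar> \<le> 1 \<and> \<bar>snd (snd t) x\<bar> \<le> 1"
     "\<forall>x\<in>cube n. \<forall>y\<in>cube n. G x y = (\<Sum>t\<leftarrow>L2. fst t * fst (snd t) x * snd (snd t) y)"
  show "\<exists>L. (\<Sum>t\<leftarrow>L. \<bar>fst t\<bar>) \<le> W1 + W2 \<and>
         (\<forall>t\<in>set L. \<forall>x\<in>cube n. \<bar>fst (snd t) x\<bar> \<le> 1 \<and> \<bar>snd (snd t) x\<bar> \<le> 1) \<and>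
         (\<forall>x\<in>cube n. \<forall>y\<in>cube n. F x y + G x y = (\<Sum>t\<leftarrow>L. fst t * fst (snd t) x * snd (snd t) y))"
    by (rule exI[of _ "L1 @ L2"]) (use a b in auto)
qed

lemma dec_scale: "dec n W F \<Longrightarrow> dec n (\<bar>c\<bar> * W) (\<lambda>x y. c * F x y)"
  unfolding dec_def
proof (elim exE conjE)
  fix L :: "(real \<times> (bool list \<Rightarrow> real) \<times> (bool list \<Rightarrow> real)) list"
  assume a: "(\<Sum>t\<leftarrow>L. \<bar>fst t\<bar>) \<le> W" "\<forall>t\<in>set L. \<forall>x\<in>cube n. \<bar>fst (snd t) x\<bar> \<le> 1 \<and> \<bar>snd (snd t) x\<bar> \<le> 1"
     "\<forall>x\<in>cube n. \<forall>y\<in>cube n. F x y = (\<Sum>t\<leftarrow>L. fst t * fst (snd t) x * snd (snd t) y)"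
  let ?L = "map (\<lambda>t. (c * fst t, snd t)) L"
  have "(\<Sum>t\<leftarrow>?L. \<bar>fst t\<bar>) = \<bar>c\<bar> * (\<Sum>t\<leftarrow>L. \<bar>fst t\<bar>)"
    by (simp add: o_def abs_mult sum_list_const_mult)
  also have "\<dots> \<le> \<bar>c\<bar> * W" using a(1) by (simp add: mult_left_mono)
  finally have 1: "(\<Sum>t\<leftarrow>?L. \<bar>fst t\<bar>) \<le> \<bar>c\<bar> * W" .
  have 3: "c * F x y = (\<Sum>t\<leftarrow>?L. fst t * fst (snd t) x * snd (snd t) y)" if "x \<in> cube n" "y \<in> cube n" for x y
    using a(3) that by (simp add: o_def sum_list_const_mult mult.assoc)
  show "\<exists>L. (\<Sum>t\<leftarrow>L. \<bar>fst t\<bar>) \<le> \<bar>c\<bar> * W \<and>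
         (\<forall>t\<in>set L. \<forall>x\<in>cube n. \<bar>fst (snd t) x\<bar> \<le> 1 \<and> \<bar>snd (snd t) x\<bar> \<le> 1) \<and>
         (\<forall>x\<in>cube n. \<forall>y\<in>cube n. c * F x y = (\<Sum>t\<leftarrow>L. fst t * fst (snd t) x * snd (snd t) y))"
    by (rule exI[of _ ?L]) (use 1 3 a(2) in auto)
qed


lemma sum_list_product:
  "(\<Sum>a\<leftarrow>L1. f a) * (\<Sum>b\<leftarrow>L2. g b) = (\<Sum>p\<leftarrow>List.product L1 L2. f (fst p) * g (snd p) :: real)"
  by (induction L1) (auto simp: algebra_simps sum_list_const_mult o_def)

lemma dec_mult: "dec n W1 F \<Longrightarrow> dec n W2 G \<Longrightarrow> dec n (W1 * W2) (\<lambda>x y. F x y * G x y)"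
  unfolding dec_def
proof (elim exE conjE)
  fix L1 L2 :: "(real \<times> (bool list \<Rightarrow> real) \<times> (bool list \<Rightarrow> real)) list"
  assume a: "(\<Sum>t\<leftarrow>L1. \<bar>fst t\<bar>) \<le> W1" "\<forall>t\<in>set L1. \<forall>x\<in>cube n. \<bar>fst (snd t) x\<bar> \<le> 1 \<and> \<bar>snd (snd t) x\<bar> \<le> 1"
     "\<forall>x\<in>cube n. \<forall>y\<in>cube n. F x y = (\<Sum>t\<leftarrow>L1. fst t * fst (snd t) x * snd (snd t) y)"
   and b: "(\<Sum>t\<leftarrow>L2. \<bar>fst t\<bar>) \<le> W2" "\<forall>t\<in>set L2. \<forall>x\<in>cube n. \<bar>fst (snd t) x\<bar> \<le> 1 \<and> \<bar>snd (snd t) x\<bar> \<le> 1"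
     "\<forall>x\<in>cube n. \<forall>y\<in>cube n. G x y = (\<Sum>t\<leftarrow>L2. fst t * fst (snd t) x * snd (snd t) y)"
  define h where "h p = (fst (fst p) * fst (snd p), (\<lambda>x. fst (snd (fst p)) x * fst (snd (snd p)) x),
                         (\<lambda>y. snd (snd (fst p)) y * snd (snd (snd p)) y))"
    for p :: "(real \<times> (bool list \<Rightarrow> real) \<times> (bool list \<Rightarrow> real)) \<times> (real \<times> (bool list \<Rightarrow> real) \<times> (bool list \<Rightarrow> real))"
  let ?L = "map h (List.product L1 L2)"
  have "(\<Sum>t\<leftarrow>?L. \<bar>fst t\<bar>) = (\<Sum>t\<leftarrow>L1. \<bar>fst t\<bar>) * (\<Sum>t\<leftarrow>L2. \<bar>fst t\<bar>)"
    by (simp add: sum_list_product h_def o_def abs_mult)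
  also have "\<dots> \<le> W1 * W2"
    using a(1) b(1) sum_list_abs_nonneg[of fst L1] sum_list_abs_nonneg[of fst L2]
    by (intro mult_mono) auto
  finally have 1: "(\<Sum>t\<leftarrow>?L. \<bar>fst t\<bar>) \<le> W1 * W2" .
  have 2: "\<forall>t\<in>set ?L. \<forall>x\<in>cube n. \<bar>fst (snd t) x\<bar> \<le> 1 \<and> \<bar>snd (snd t) x\<bar> \<le> 1"
  proof (intro ballI)
    fix t x assume t: "t \<in> set ?L" and x: "x \<in> cube n"
    then obtain p q where p: "p \<in> set L1" "q \<in> set L2" "t = h (p, q)" by auto
    show "\<bar>fst (snd t) x\<bar> \<le> 1 \<and> \<bar>snd (snd t) x\<bar> \<le> 1"
      using a(2) b(2) p x unfolding h_def by (auto simp: abs_mult intro: mult_le_one)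
  qed
  have 3: "F x y * G x y = (\<Sum>t\<leftarrow>?L. fst t * fst (snd t) x * snd (snd t) y)" if "x \<in> cube n" "y \<in> cube n" for x y
    using a(3) b(3) that by (simp add: sum_list_product h_def o_def algebra_simps)
  show "\<exists>L. (\<Sum>t\<leftarrow>L. \<bar>fst t\<bar>) \<le> W1 * W2 \<and>
         (\<forall>t\<in>set L. \<forall>x\<in>cube n. \<bar>fst (snd t) x\<bar> \<le> 1 \<and> \<bar>snd (snd t) x\<bar> \<le> 1) \<and>
         (\<forall>x\<in>cube n. \<forall>y\<in>cube n. F x y * G x y = (\<Sum>t\<leftarrow>L. fst t * fst (snd t) x * snd (snd t) y))"
    by (rule exI[of _ ?L]) (use 1 2 3 in auto)
qed

lemma dec_pow: "dec n W F \<Longrightarrow> dec n (W ^ k) (\<lambda>x y. F x y ^ k)"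
proof (induction k)
  case 0 then show ?case using dec_const[of n 1] by simp
next
  case (Suc k)
  then show ?case using dec_mult[OF Suc.prems Suc.IH] by (simp add: mult.commute)
qed

lemma dec_sum: "finite J \<Longrightarrow> (\<And>j. j \<in> J \<Longrightarrow> dec n (W j) (F j)) \<Longrightarrow>
   dec n (\<Sum>j\<in>J. W j) (\<lambda>x y. \<Sum>j\<in>J. F j x y)"
proof (induction J rule: finite_induct)
  case empty then show ?case using dec_zero by simp
next
  case (insert a J)
  then show ?case using dec_add[of n "W a" "F a" "\<Sum>j\<in>J. W j" "\<lambda>x y. \<Sum>j\<in>J. F j x y"] by simp
qed

lemma term_bound1:
  fixes a b :: real
  assumes "0 \<le> b" "b \<le> a" "j \<le> r"
  shows "a ^ j * b ^ (2 * r - j) \<le> (a * b) ^ r"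
proof -
  obtain k where k: "r = j + k" using le_Suc_ex assms(3) by blast
  have e: "2 * r - j = j + k + k" using k by simp
  have "a ^ j * b ^ (2 * r - j) = (a * b) ^ j * (b * b) ^ (r - j)"
    unfolding e using k by (simp add: power_add power_mult_distrib ac_simps)
  also have "\<dots> \<le> (a * b) ^ j * (a * b) ^ (r - j)"
    using assms by (intro mult_left_mono power_mono mult_right_mono) auto
  also have "\<dots> = (a * b) ^ r" using assms(3) by (simp add: power_add[symmetric])
  finally show ?thesis .
qed

lemma term_bound2:
  fixes a b :: real
  assumes "0 \<le> a" "a \<le> b" "r \<le> j" "j \<le> 2 * r"
  shows "a ^ j * b ^ (2 * r - j) \<le> (a * b) ^ r"
  using term_bound1[of a b "2 * r - j" r] assms by (simp add: mult.commute)


lemma pq_bound: "0 \<le> (p::real) \<Longrightarrow> p \<le> 1/3 \<Longrightarrow> p * (1 - p) \<le> 2/9"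
proof -
  assume "0 \<le> p" "p \<le> 1/3"
  have "0 \<le> (1/3 - p) * (2/3 - p)" using \<open>p \<le> 1/3\<close> by (intro mult_nonneg_nonneg) auto
  moreover have "(1/3 - p) * (2/3 - p) = 2/9 - p * (1 - p)" by (simp add: field_simps)
  ultimately show ?thesis by linarith
qed

lemma choose_sub_bound: "J \<subseteq> {..2*r} \<Longrightarrow> (\<Sum>j\<in>J. real (2 * r choose j)) \<le> 4 ^ r"
proof -
  assume J: "J \<subseteq> {..2*r}"
  have "(\<Sum>j\<in>J. real (2 * r choose j)) \<le> (\<Sum>j\<le>2*r. real (2 * r choose j))"
    by (rule sum_mono2) (use J in auto)
  also have "\<dots> = 2 ^ (2 * r)" using choose_row_sum[of "2*r"] by (simp flip: of_nat_sum)
  also have "\<dots> = 4 ^ r" by (simp add: power_mult)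
  finally show ?thesis .
qed

lemma maj_low:
  assumes "0 \<le> p" "p \<le> 1/3"
  shows "(\<Sum>j\<in>{r<..2*r}. real (2*r choose j) * p ^ j * (1 - p) ^ (2*r - j)) \<le> (8/9) ^ r"
proof -
  have "(\<Sum>j\<in>{r<..2*r}. real (2*r choose j) * p ^ j * (1 - p) ^ (2*r - j))
      \<le> (\<Sum>j\<in>{r<..2*r}. real (2*r choose j) * (2/9) ^ r)"
  proof (rule sum_mono)
    fix j assume j: "j \<in> {r<..2*r}"
    have "p ^ j * (1 - p) ^ (2*r - j) \<le> (p * (1 - p)) ^ r"
      using assms j by (intro term_bound2) auto
    also have "\<dots> \<le> (2/9) ^ r"
      using assms pq_bound by (intro power_mono) auto
    finally show "real (2*r choose j) * p ^ j * (1 - p) ^ (2*r - j) \<le> real (2*r choose j) * (2/9) ^ r"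
      by (simp add: mult.assoc mult_left_mono)
  qed
  also have "\<dots> = (\<Sum>j\<in>{r<..2*r}. real (2*r choose j)) * (2/9) ^ r" by (simp add: sum_distrib_right)
  also have "\<dots> \<le> 4 ^ r * (2/9) ^ r" by (intro mult_right_mono choose_sub_bound) auto
  also have "\<dots> = (8/9) ^ r" by (simp add: power_mult_distrib[symmetric])
  finally show ?thesis .
qed

lemma maj_high:
  assumes "2/3 \<le> p" "p \<le> 1"
  shows "(\<Sum>j\<in>{..r}. real (2*r choose j) * p ^ j * (1 - p) ^ (2*r - j)) \<le> (8/9) ^ r"
proof -
  have "(\<Sum>j\<in>{..r}. real (2*r choose j) * p ^ j * (1 - p) ^ (2*r - j))
      \<le> (\<Sum>j\<in>{..r}. real (2*r choose j) * (2/9) ^ r)"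
  proof (rule sum_mono)
    fix j assume j: "j \<in> {..r}"
    have "p ^ j * (1 - p) ^ (2*r - j) \<le> (p * (1 - p)) ^ r"
      using assms j by (intro term_bound1) auto
    also have "\<dots> \<le> (2/9) ^ r"
      using assms pq_bound[of "1 - p"] by (intro power_mono) (auto simp: mult.commute)
    finally show "real (2*r choose j) * p ^ j * (1 - p) ^ (2*r - j) \<le> real (2*r choose j) * (2/9) ^ r"
      by (simp add: mult.assoc mult_left_mono)
  qed
  also have "\<dots> = (\<Sum>j\<in>{..r}. real (2*r choose j)) * (2/9) ^ r" by (simp add: sum_distrib_right)
  also have "\<dots> \<le> 4 ^ r * (2/9) ^ r" by (intro mult_right_mono choose_sub_bound) auto
  also have "\<dots> = (8/9) ^ r" by (simp add: power_mult_distrib[symmetric])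
  finally show ?thesis .
qed

lemma binom_split:
  "(\<Sum>j\<in>{..r}. real (2*r choose j) * p ^ j * (1 - p) ^ (2*r - j))
   + (\<Sum>j\<in>{r<..2*r}. real (2*r choose j) * p ^ j * (1 - p) ^ (2*r - j)) = 1"
proof -
  have "{..2*r} = {..r} \<union> {r<..2*r}" by auto
  then have "(\<Sum>j\<in>{..2*r}. real (2*r choose j) * p ^ j * (1 - p) ^ (2*r - j))
     = (\<Sum>j\<in>{..r}. real (2*r choose j) * p ^ j * (1 - p) ^ (2*r - j))
     + (\<Sum>j\<in>{r<..2*r}. real (2*r choose j) * p ^ j * (1 - p) ^ (2*r - j))"
    by (simp add: sum.union_disjoint ivl_disj_int)
  moreover have "(\<Sum>j\<in>{..2*r}. real (2*r choose j) * p ^ j * (1 - p) ^ (2*r - j)) = 1"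
    using binomial_ring[of p "1 - p" "2*r"] by simp
  ultimately show ?thesis by simp
qed

definition maj :: "nat \<Rightarrow> real \<Rightarrow> real" where
  "maj r p = (\<Sum>j\<in>{r<..2*r}. real (2*r choose j) * p ^ j * (1 - p) ^ (2*r - j))"

lemma maj_err:
  assumes "0 \<le> p" "p \<le> 1" "\<bar>F - p\<bar> \<le> 1/3" "F = 0 \<or> F = 1"
  shows "\<bar>F - maj r p\<bar> \<le> (8/9) ^ r"
proof -
  have nn1: "0 \<le> (\<Sum>j\<in>{..r}. real (2*r choose j) * p ^ j * (1 - p) ^ (2*r - j))"
    using assms by (intro sum_nonneg) auto
  have nn2: "0 \<le> maj r p" unfolding maj_def using assms by (intro sum_nonneg) auto
  show ?thesis
  proof (cases "F = 0")
    case True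
    then show ?thesis using maj_low[of p r] assms nn2 unfolding maj_def by auto
  next
    case False
    then have "F = 1" using assms by auto
    then show ?thesis using maj_high[of p r] assms nn1 binom_split[of r p] unfolding maj_def by auto
  qed
qed

lemma dec_maj:
  assumes "dec n W P"
  shows "dec n ((2 * W + 1) ^ (2 * r)) (\<lambda>x y. maj r (P x y))"
proof -
  have W: "0 \<le> W" using dec_nonneg[OF assms] .
  have d1: "dec n (1 + W) (\<lambda>x y. 1 - P x y)"
    using dec_add[OF dec_const[of n 1] dec_scale[OF assms, of "-1"]] by simp
  have dj: "dec n (real (2*r choose j) * (W ^ j * (1 + W) ^ (2*r - j)))
      (\<lambda>x y. real (2*r choose j) * P x y ^ j * (1 - P x y) ^ (2*r - j))" for j
    using dec_scale[OF dec_mult[OF dec_pow[OF assms, of j] dec_pow[OF d1, of "2*r - j"]], of "real (2*r choose j)"]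
    by (simp add: mult.assoc)
  have "dec n (\<Sum>j\<in>{r<..2*r}. real (2*r choose j) * (W ^ j * (1 + W) ^ (2*r - j))) (\<lambda>x y. maj r (P x y))"
    unfolding maj_def by (rule dec_sum) (auto intro: dj)
  moreover have "(\<Sum>j\<in>{r<..2*r}. real (2*r choose j) * (W ^ j * (1 + W) ^ (2*r - j)))
      \<le> (\<Sum>j\<in>{..2*r}. real (2*r choose j) * (W ^ j * (1 + W) ^ (2*r - j)))"
    by (rule sum_mono2) (use W in auto)
  moreover have "(\<Sum>j\<in>{..2*r}. real (2*r choose j) * (W ^ j * (1 + W) ^ (2*r - j))) = (2 * W + 1) ^ (2 * r)"
    using binomial_ring[of W "1 + W" "2*r"] by (simp add: mult.assoc)
  ultimately show ?thesis using dec_mono by fastforce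
qed


definition agreeOn :: "nat \<Rightarrow> nat set \<Rightarrow> bool list \<Rightarrow> bool list \<Rightarrow> bool" where
  "agreeOn m S b b' \<longleftrightarrow> (\<forall>i<m. i \<in> S \<longrightarrow> b ! i = b' ! i)"

definition depends :: "nat \<Rightarrow> nat set \<Rightarrow> (bool list \<Rightarrow> complex) \<Rightarrow> bool" where
  "depends m S g \<longleftrightarrow> (\<forall>b\<in>cube m. \<forall>b'\<in>cube m. agreeOn m S b b' \<longrightarrow> g b = g b')"

definition Zs :: "nat \<Rightarrow> nat set \<Rightarrow> bool list set" where
  "Zs m S = {b\<in>cube m. \<forall>i<m. i \<notin> S \<longrightarrow> \<not> b ! i}"

definition nrm :: "nat \<Rightarrow> nat set \<Rightarrow> (bool list \<Rightarrow> complex) \<Rightarrow> real" where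
  "nrm m S g = (\<Sum>b\<in>Zs m S. (cmod (g b))\<^sup>2)"

lemma finite_Zs[simp]: "finite (Zs m S)"
  unfolding Zs_def by simp

lemma Zs_sub: "Zs m S \<subseteq> cube m" unfolding Zs_def by auto

lemma nth_ge_len: "length xs = length ys \<Longrightarrow> length xs \<le> i \<Longrightarrow> xs ! i = ys ! i"
proof (induction xs arbitrary: ys i)
  case Nil then show ?case by simp
next
  case (Cons a xs)
  then obtain c ys' where ys: "ys = c # ys'" by (cases ys) auto
  obtain k where i: "i = Suc k" using Cons.prems by (cases i) auto
  show ?case using Cons.IH[of ys' k] Cons.prems ys i by simp
qed

lemma depends_cong: "(\<And>i. i < m \<Longrightarrow> i \<in> S \<longleftrightarrow> i \<in> S') \<Longrightarrow> depends m S g = depends m S' g"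
  unfolding depends_def agreeOn_def by auto

lemma Zs_cong: "(\<And>i. i < m \<Longrightarrow> i \<in> S \<longleftrightarrow> i \<in> S') \<Longrightarrow> Zs m S = Zs m S'"
  unfolding Zs_def by auto

lemma nrm_cong:
  assumes "\<And>i. i < m \<Longrightarrow> i \<in> S \<longleftrightarrow> i \<in> S'"
  shows "nrm m S g = nrm m S' g"
  unfolding nrm_def using Zs_cong[of m S S', OF assms] by simp

lemma local_zero:
  assumes "local_op m S U" "b \<in> cube m" "b' \<in> cube m" "U b b' \<noteq> 0"
  shows "\<forall>i<m. i \<notin> S \<longrightarrow> b ! i = b' ! i"
proof -
  have c: "\<forall>b\<in>cube m. \<forall>b'\<in>cube m. (\<exists>i<m. i \<notin> S \<and> b ! i \<noteq> b' ! i) \<longrightarrow> U b b' = 0"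
    using assms(1) unfolding local_op_def by (rule conjunct1)
  show ?thesis
  proof (rule ccontr)
    assume "\<not> (\<forall>i<m. i \<notin> S \<longrightarrow> b ! i = b' ! i)"
    then have "\<exists>i<m. i \<notin> S \<and> b ! i \<noteq> b' ! i" by blast
    then show False using c assms(2-4) by blast
  qed
qed

lemma unit_step:
  assumes "local_op m S U" "b \<in> cube m" "depends m (- S) h"
  shows "(\<Sum>b'\<in>cube m. U b b' * (g b' * h b')) = (\<Sum>b'\<in>cube m. U b b' * g b') * h b"
  unfolding sum_distrib_right
proof (rule sum.cong[OF refl])
  fix b' assume b': "b' \<in> cube m"
  show "U b b' * (g b' * h b') = U b b' * g b' * h b"
  proof (cases "U b b' = 0")
    case False
    then have "\<forall>i<m. i \<notin> S \<longrightarrow> b ! i = b' ! i" using local_zero[OF assms(1) assms(2) b'] by blast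
    then have ag: "agreeOn m (- S) b' b" unfolding agreeOn_def by simp
    have "\<forall>b\<in>cube m. \<forall>b'\<in>cube m. agreeOn m (- S) b b' \<longrightarrow> h b = h b'"
      using assms(3) unfolding depends_def .
    then have "h b' = h b" using ag b' assms(2) by blast
    then show ?thesis by simp
  qed simp
qed


lemma unit_dep:
  assumes loc: "local_op m S U" and dep: "depends m S g"
  shows "depends m S (\<lambda>b. \<Sum>b'\<in>cube m. U b b' * g b')"
  unfolding depends_def
proof (intro ballI impI)
  fix b1 b2 assume b1: "b1 \<in> cube m" and b2: "b2 \<in> cube m" and ag: "agreeOn m S b1 b2"
  define F1 where "F1 = {b'\<in>cube m. \<forall>i<m. i \<notin> S \<longrightarrow> b1 ! i = b' ! i}"
  define F2 where "F2 = {b'\<in>cube m. \<forall>i<m. i \<notin> S \<longrightarrow> b2 ! i = b' ! i}"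
  define T where "T b' = map (\<lambda>i. if i \<in> S then b' ! i else b2 ! i) [0..<m]" for b'
  define T' where "T' b' = map (\<lambda>i. if i \<in> S then b' ! i else b1 ! i) [0..<m]" for b'
  have l1: "length b1 = m" "length b2 = m" using b1 b2 by (auto simp: cube_def)
  have s1: "(\<Sum>b'\<in>cube m. U b1 b' * g b') = (\<Sum>b'\<in>F1. U b1 b' * g b')"
    by (rule sum.mono_neutral_right) (use local_zero[OF loc b1] in \<open>auto simp: F1_def\<close>)
  have s2: "(\<Sum>b'\<in>cube m. U b2 b' * g b') = (\<Sum>b'\<in>F2. U b2 b' * g b')"
    by (rule sum.mono_neutral_right) (use local_zero[OF loc b2] in \<open>auto simp: F2_def\<close>)
  have "(\<Sum>b'\<in>F1. U b1 b' * g b') = (\<Sum>b'\<in>F2. U b2 b' * g b')"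
  proof (rule sum.reindex_bij_witness[of _ T' T])
    fix a assume a: "a \<in> F1"
    then have la: "length a = m" by (auto simp: F1_def cube_def)
    show "T' (T a) = a" using a la by (intro nth_equalityI) (auto simp: T_def T'_def F1_def)
    show "T a \<in> F2" by (auto simp: T_def F2_def cube_def)
    have lt: "length (T a) = m" by (simp add: T_def)
    have ag2: "agreeOn m S a (T a)" by (auto simp: agreeOn_def T_def)
    have aC: "a \<in> cube m" "T a \<in> cube m" using a by (auto simp: F1_def cube_def T_def)
    have "g a = g (T a)" using dep aC ag2 unfolding depends_def by blast
    then have "g (T a) = g a" by simp
    moreover have "U b2 (T a) = U b1 a"
    proof -
      have "\<forall>i\<in>S. b1 ! i = b2 ! i \<and> a ! i = T a ! i"
      proof
        fix i assume i: "i \<in> S"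
        show "b1 ! i = b2 ! i \<and> a ! i = T a ! i"
        proof (cases "i < m")
          case True then show ?thesis using ag i by (auto simp: agreeOn_def T_def)
        next
          case False then show ?thesis using nth_ge_len[of b1 b2 i] nth_ge_len[of a "T a" i] l1 la lt by auto
        qed
      qed
      moreover have "\<forall>i<m. i \<notin> S \<longrightarrow> b1 ! i = a ! i \<and> b2 ! i = T a ! i"
        using a by (auto simp: F1_def T_def)
      ultimately have "U b1 a = U b2 (T a)"
        using loc b1 b2 aC unfolding local_op_def by blast
      then show ?thesis by simp
    qed
    ultimately show "U b2 (T a) * g (T a) = U b1 a * g a" by simp
  next
    fix c assume c: "c \<in> F2"
    then have lc: "length c = m" by (auto simp: F2_def cube_def)
    show "T (T' c) = c" using c lc by (intro nth_equalityI) (auto simp: T_def T'_def F2_def)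
    show "T' c \<in> F1" by (auto simp: T'_def F1_def cube_def)
  qed
  then show "(\<Sum>b'\<in>cube m. U b1 b' * g b') = (\<Sum>b'\<in>cube m. U b2 b' * g b')" using s1 s2 by simp
qed


lemma isometry:
  fixes U :: "bool list \<Rightarrow> bool list \<Rightarrow> complex"
  assumes fD: "finite D"
    and orth: "\<And>b1 b2. b1 \<in> D \<Longrightarrow> b2 \<in> D \<Longrightarrow> (\<Sum>c\<in>D. cnj (U c b1) * U c b2) = (if b1 = b2 then 1 else 0)"
  shows "(\<Sum>c\<in>D. (cmod (\<Sum>b\<in>D. U c b * v b))\<^sup>2) = (\<Sum>b\<in>D. (cmod (v b))\<^sup>2)"
proof -
  have o2: "(\<Sum>c\<in>D. U c b1 * cnj (U c b2)) = (if b1 = b2 then 1 else 0)" if "b1 \<in> D" "b2 \<in> D" for b1 b2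
  proof -
    have "cnj (\<Sum>c\<in>D. cnj (U c b1) * U c b2) = (\<Sum>c\<in>D. U c b1 * cnj (U c b2))"
      by (simp only: cnj_sum complex_cnj_mult complex_cnj_cnj)
    then show ?thesis using orth[OF that] by (simp split: if_splits)
  qed
  have step: "(\<Sum>b\<in>D. U c b * v b) * cnj (\<Sum>b\<in>D. U c b * v b)
      = (\<Sum>b\<in>D. \<Sum>b'\<in>D. v b * cnj (v b') * (U c b * cnj (U c b')))" for c
  proof -
    have "(\<Sum>b\<in>D. U c b * v b) * cnj (\<Sum>b\<in>D. U c b * v b)
        = (\<Sum>b\<in>D. U c b * v b) * (\<Sum>b'\<in>D. cnj (U c b') * cnj (v b'))"
      by (simp only: cnj_sum complex_cnj_mult)
    also have "\<dots> = (\<Sum>b\<in>D. \<Sum>b'\<in>D. (U c b * v b) * (cnj (U c b') * cnj (v b')))"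
      by (rule sum_product)
    also have "\<dots> = (\<Sum>b\<in>D. \<Sum>b'\<in>D. v b * cnj (v b') * (U c b * cnj (U c b')))"
      by (intro sum.cong refl) (simp only: ac_simps)
    finally show ?thesis .
  qed
  have "complex_of_real (\<Sum>c\<in>D. (cmod (\<Sum>b\<in>D. U c b * v b))\<^sup>2)
      = (\<Sum>c\<in>D. (\<Sum>b\<in>D. U c b * v b) * cnj (\<Sum>b\<in>D. U c b * v b))"
    by (simp only: of_real_sum complex_norm_square)
  also have "\<dots> = (\<Sum>c\<in>D. \<Sum>b\<in>D. \<Sum>b'\<in>D. v b * cnj (v b') * (U c b * cnj (U c b')))"
    by (simp only: step)
  also have "\<dots> = (\<Sum>b\<in>D. \<Sum>c\<in>D. \<Sum>b'\<in>D. v b * cnj (v b') * (U c b * cnj (U c b')))"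
    by (rule sum.swap)
  also have "\<dots> = (\<Sum>b\<in>D. \<Sum>b'\<in>D. \<Sum>c\<in>D. v b * cnj (v b') * (U c b * cnj (U c b')))"
    by (rule sum.cong[OF refl], rule sum.swap)
  also have "\<dots> = (\<Sum>b\<in>D. \<Sum>b'\<in>D. v b * cnj (v b') * (\<Sum>c\<in>D. U c b * cnj (U c b')))"
    by (simp only: sum_distrib_left)
  also have "\<dots> = (\<Sum>b\<in>D. \<Sum>b'\<in>D. v b * cnj (v b') * (if b = b' then 1 else 0))"
    by (intro sum.cong refl) (simp only: o2)
  also have "\<dots> = (\<Sum>b\<in>D. v b * cnj (v b))"
  proof (rule sum.cong[OF refl])
    fix b assume b: "b \<in> D"
    have "(\<Sum>b'\<in>D. v b * cnj (v b') * (if b = b' then 1 else 0)) = (\<Sum>b'\<in>D. if b = b' then v b * cnj (v b') else 0)"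
      by (intro sum.cong refl) simp
    also have "\<dots> = v b * cnj (v b)" using fD b by (simp add: sum.delta)
    finally show "(\<Sum>b'\<in>D. v b * cnj (v b') * (if b = b' then 1 else 0)) = v b * cnj (v b)" .
  qed
  also have "\<dots> = complex_of_real (\<Sum>b\<in>D. (cmod (v b))\<^sup>2)"
    by (simp only: of_real_sum complex_norm_square)
  finally show ?thesis by (simp only: of_real_eq_iff)
qed

lemma unit_nrm:
  assumes uni: "unitary_op m U" and loc: "local_op m S U"
  shows "nrm m S (\<lambda>b. \<Sum>b'\<in>cube m. U b b' * g b') = nrm m S g"
proof -
  have zero: "U c b = 0" if "c \<in> cube m" "b \<in> Zs m S" "c \<notin> Zs m S \<or> b \<notin> Zs m S" for c b
  proof (rule ccontr)
    assume "U c b \<noteq> 0"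
    then have "\<forall>i<m. i \<notin> S \<longrightarrow> c ! i = b ! i" using local_zero[OF loc] that Zs_sub by blast
    then show False using that by (auto simp: Zs_def)
  qed
  have zero2: "U b c = 0" if "c \<in> cube m" "b \<in> Zs m S" "c \<notin> Zs m S" for c b
  proof (rule ccontr)
    assume "U b c \<noteq> 0"
    then have "\<forall>i<m. i \<notin> S \<longrightarrow> b ! i = c ! i" using local_zero[OF loc] that Zs_sub by blast
    then show False using that by (auto simp: Zs_def)
  qed
  have red: "(\<Sum>b'\<in>cube m. U b b' * g b') = (\<Sum>b'\<in>Zs m S. U b b' * g b')" if "b \<in> Zs m S" for b
    by (rule sum.mono_neutral_right) (use zero2 that Zs_sub in auto)
  have orth: "(\<Sum>c\<in>Zs m S. cnj (U c b1) * U c b2) = (if b1 = b2 then 1 else 0)"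
    if "b1 \<in> Zs m S" "b2 \<in> Zs m S" for b1 b2
  proof -
    have "(\<Sum>c\<in>Zs m S. cnj (U c b1) * U c b2) = (\<Sum>c\<in>cube m. cnj (U c b1) * U c b2)"
      by (rule sum.mono_neutral_left) (use zero that Zs_sub in auto)
    moreover have b1c: "b1 \<in> cube m" and b2c: "b2 \<in> cube m" using that Zs_sub by auto
    moreover have "(\<Sum>c\<in>cube m. cnj (U c b1) * U c b2) = (if b1 = b2 then 1 else 0)"
      using bspec[OF bspec[OF uni[unfolded unitary_op_def] b1c] b2c] .
    ultimately show ?thesis by simp
  qed
  show ?thesis unfolding nrm_def
    using isometry[OF finite_Zs orth, of g] red by simp
qed


lemma split_dep1:
  assumes q: "q \<in> S" "q < m" and dg: "depends m S g"
  shows "depends m (S - {q}) (\<lambda>b. g (b[q:=v]))"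
  unfolding depends_def
proof (intro ballI impI)
  fix b1 b2 assume b: "b1 \<in> cube m" "b2 \<in> cube m" and ag: "agreeOn m (S - {q}) b1 b2"
  have c: "b1[q:=v] \<in> cube m" "b2[q:=v] \<in> cube m" using b by (auto simp: cube_def)
  have "agreeOn m S (b1[q:=v]) (b2[q:=v])"
    using ag b q unfolding agreeOn_def cube_def by (auto simp: nth_list_update)
  then show "g (b1[q:=v]) = g (b2[q:=v])" using dg c unfolding depends_def by blast
qed

lemma split_dep2:
  assumes q: "q \<in> S" "q < m" and dh: "depends m (- S) h"
  shows "depends m (- (S - {q})) (\<lambda>b. if b ! q = v then h b else 0)"
  unfolding depends_def
proof (intro ballI impI)
  fix b1 b2 assume b: "b1 \<in> cube m" "b2 \<in> cube m" and ag: "agreeOn m (- (S - {q})) b1 b2"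
  have bq: "b1 ! q = b2 ! q" using ag q unfolding agreeOn_def by auto
  have "agreeOn m (- S) b1 b2" using ag unfolding agreeOn_def by auto
  then have "h b1 = h b2" using dh b unfolding depends_def by blast
  then show "(if b1 ! q = v then h b1 else 0) = (if b2 ! q = v then h b2 else 0)" using bq by simp
qed

lemma split_nrm1:
  assumes q: "q \<in> S" "q < m"
  shows "nrm m (S - {q}) (\<lambda>b. g (b[q:=v])) \<le> nrm m S g"
proof -
  let ?f = "\<lambda>(b::bool list). b[q:=v]"
  have inj: "inj_on ?f (Zs m (S - {q}))"
  proof (rule inj_onI)
    fix b1 b2 assume b1: "b1 \<in> Zs m (S - {q})" and b2: "b2 \<in> Zs m (S - {q})" and e: "b1[q:=v] = b2[q:=v]"
    have "\<not> b1 ! q" "\<not> b2 ! q" using b1 b2 q unfolding Zs_def by auto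
    then have "(b1[q:=v])[q:=False] = b1[q:=b1!q]" "(b2[q:=v])[q:=False] = b2[q:=b2!q]" by simp_all
    then have "b1 = (b1[q:=v])[q:=False]" "b2 = (b2[q:=v])[q:=False]" by simp_all
    then show "b1 = b2" using e by simp
  qed
  have sub: "?f ` Zs m (S - {q}) \<subseteq> Zs m S"
    using q unfolding Zs_def cube_def by (auto simp: nth_list_update split: if_splits)
  have "nrm m (S - {q}) (\<lambda>b. g (b[q:=v])) = (\<Sum>b\<in>?f ` Zs m (S - {q}). (cmod (g b))\<^sup>2)"
    unfolding nrm_def by (simp add: sum.reindex[OF inj])
  also have "\<dots> \<le> nrm m S g" unfolding nrm_def
    by (rule sum_mono2[OF finite_Zs sub]) auto
  finally show ?thesis .
qed

lemma split_nrm2: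
  assumes q: "q \<in> S" "q < m" and dh: "depends m (- S) h"
  shows "nrm m (- (S - {q})) (\<lambda>b. if b ! q = v then h b else 0) \<le> nrm m (- S) h"
proof -
  let ?Z = "Zs m (- (S - {q}))"
  let ?Y = "{b\<in>?Z. b ! q = v}"
  let ?f = "\<lambda>(b::bool list). b[q:=False]"
  have e1: "nrm m (- (S - {q})) (\<lambda>b. if b ! q = v then h b else 0) = (\<Sum>b\<in>?Y. (cmod (h b))\<^sup>2)"
  proof -
    have "(\<Sum>b\<in>?Z. (cmod (if b ! q = v then h b else 0))\<^sup>2) = (\<Sum>b\<in>?Z. if b ! q = v then (cmod (h b))\<^sup>2 else 0)"
      by (rule sum.cong) auto
    also have "\<dots> = (\<Sum>b\<in>?Y. (cmod (h b))\<^sup>2)" by (simp add: sum.inter_filter)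
    finally show ?thesis unfolding nrm_def .
  qed
  have inj: "inj_on ?f ?Y"
  proof (rule inj_onI)
    fix b1 b2 assume b1: "b1 \<in> ?Y" and b2: "b2 \<in> ?Y" and e: "b1[q:=False] = b2[q:=False]"
    have "b1 ! q = v" "b2 ! q = v" using b1 b2 by auto
    then have "(b1[q:=False])[q:=v] = b1[q:=b1!q]" "(b2[q:=False])[q:=v] = b2[q:=b2!q]" by simp_all
    then have "b1 = (b1[q:=False])[q:=v]" "b2 = (b2[q:=False])[q:=v]" by simp_all
    then show "b1 = b2" using e by simp
  qed
  have sub: "?f ` ?Y \<subseteq> Zs m (- S)"
    using q unfolding Zs_def cube_def by (auto simp: nth_list_update split: if_splits)
  have hq: "h b = h (b[q:=False])" if "b \<in> ?Y" for b
  proof -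
    have c: "b \<in> cube m" "b[q:=False] \<in> cube m" using that unfolding Zs_def cube_def by auto
    have "agreeOn m (- S) b (b[q:=False])" unfolding agreeOn_def
    proof (intro allI impI)
      fix i assume "i < m" "i \<in> - S"
      then have "q \<noteq> i" using q by auto
      then show "b ! i = b[q:=False] ! i" by simp
    qed
    then show ?thesis using dh c unfolding depends_def by blast
  qed
  have "(\<Sum>b\<in>?Y. (cmod (h b))\<^sup>2) = (\<Sum>b\<in>?Y. (cmod (h (b[q:=False])))\<^sup>2)"
    by (rule sum.cong[OF refl]) (simp add: hq)
  also have "\<dots> = (\<Sum>b\<in>?f ` ?Y. (cmod (h b))\<^sup>2)"
    by (simp only: sum.reindex[OF inj] o_def)
  also have "\<dots> \<le> nrm m (- S) h" unfolding nrm_def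
    by (rule sum_mono2[OF finite_Zs sub]) auto
  finally show ?thesis using e1 by simp
qed

lemma split_sum:
  fixes g h :: "bool list \<Rightarrow> complex"
  shows "g b * h b = g (b[q:=True]) * (if b ! q = True then h b else 0)
             + g (b[q:=False]) * (if b ! q = False then h b else 0)"
proof (cases "b ! q")
  case True
  then have "b[q:=True] = b" using list_update_id[of b q] by simp
  then show ?thesis using True by simp
next
  case False
  then have "b[q:=False] = b" using list_update_id[of b q] by simp
  then show ?thesis using False by simp
qed


type_synonym qterm = "(bool list \<Rightarrow> bool list \<Rightarrow> complex) \<times> (bool list \<Rightarrow> bool list \<Rightarrow> complex)"

definition qinv :: "nat \<Rightarrow> nat \<Rightarrow> nat set \<Rightarrow> qterm list \<Rightarrow> (bool list \<Rightarrow> bool list \<Rightarrow> bool list \<Rightarrow> complex) \<Rightarrow> bool" where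
  "qinv n m A ts \<Psi> \<longleftrightarrow> A \<subseteq> {0..<m} \<and>
     (\<forall>p\<in>set ts. (\<forall>x\<in>cube n. depends m A (fst p x) \<and> nrm m A (fst p x) \<le> 1) \<and>
                 (\<forall>y\<in>cube n. depends m (- A) (snd p y) \<and> nrm m (- A) (snd p y) \<le> 1)) \<and>
     (\<forall>x\<in>cube n. \<forall>y\<in>cube n. \<forall>b\<in>cube m. \<Psi> x y b = (\<Sum>p\<leftarrow>ts. fst p x b * snd p y b))"

definition uA :: "nat \<Rightarrow> qop \<Rightarrow> qterm \<Rightarrow> qterm" where
  "uA m U p = ((\<lambda>x b. \<Sum>b'\<in>cube m. U b b' * fst p x b'), snd p)"

definition uB :: "nat \<Rightarrow> qop \<Rightarrow> qterm \<Rightarrow> qterm" where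
  "uB m U p = (fst p, (\<lambda>y b. \<Sum>b'\<in>cube m. U b b' * snd p y b'))"

definition sA :: "nat \<Rightarrow> bool \<Rightarrow> qterm \<Rightarrow> qterm" where
  "sA q v p = ((\<lambda>x b. fst p x (b[q:=v])), (\<lambda>y b. if b ! q = v then snd p y b else 0))"

definition sB :: "nat \<Rightarrow> bool \<Rightarrow> qterm \<Rightarrow> qterm" where
  "sB q v p = ((\<lambda>x b. if b ! q = v then fst p x b else 0), (\<lambda>y b. snd p y (b[q:=v])))"

lemma sum_list_map_mult_right: "(\<Sum>p\<leftarrow>ts. f p) * (c::complex) = (\<Sum>p\<leftarrow>ts. f p * c)"
  by (induction ts) (auto simp: algebra_simps)

lemma invI:
  assumes "A \<subseteq> {0..<m}"
    and "\<And>p x. p \<in> set ts \<Longrightarrow> x \<in> cube n \<Longrightarrow> depends m A (fst p x) \<and> nrm m A (fst p x) \<le> 1"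
    and "\<And>p y. p \<in> set ts \<Longrightarrow> y \<in> cube n \<Longrightarrow> depends m (- A) (snd p y) \<and> nrm m (- A) (snd p y) \<le> 1"
    and "\<And>x y b. x \<in> cube n \<Longrightarrow> y \<in> cube n \<Longrightarrow> b \<in> cube m \<Longrightarrow> \<Psi> x y b = (\<Sum>p\<leftarrow>ts. fst p x b * snd p y b)"
  shows "qinv n m A ts \<Psi>"
  unfolding qinv_def using assms by blast

lemma invD:
  assumes "qinv n m A ts \<Psi>"
  shows "A \<subseteq> {0..<m}"
    and "\<And>p x. p \<in> set ts \<Longrightarrow> x \<in> cube n \<Longrightarrow> depends m A (fst p x)"
    and "\<And>p x. p \<in> set ts \<Longrightarrow> x \<in> cube n \<Longrightarrow> nrm m A (fst p x) \<le> 1"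
    and "\<And>p y. p \<in> set ts \<Longrightarrow> y \<in> cube n \<Longrightarrow> depends m (- A) (snd p y)"
    and "\<And>p y. p \<in> set ts \<Longrightarrow> y \<in> cube n \<Longrightarrow> nrm m (- A) (snd p y) \<le> 1"
    and "\<And>x y b. x \<in> cube n \<Longrightarrow> y \<in> cube n \<Longrightarrow> b \<in> cube m \<Longrightarrow> \<Psi> x y b = (\<Sum>p\<leftarrow>ts. fst p x b * snd p y b)"
  using assms unfolding qinv_def by blast+

lemma inv_unitaryA:
  assumes qinv: "qinv n m A ts \<Psi>" and uni: "unitary_op m U" and loc: "local_op m A U"
  shows "qinv n m A (map (uA m U) ts) (\<lambda>x y. apply_op m U (\<Psi> x y))"
proof (rule invI)
  show "A \<subseteq> {0..<m}" using invD(1)[OF qinv] .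
next
  fix p' x assume p': "p' \<in> set (map (uA m U) ts)" and x: "x \<in> cube n"
  then obtain p where p: "p \<in> set ts" "p' = uA m U p" by auto
  have d: "depends m A (fst p x)" "nrm m A (fst p x) \<le> 1" using invD(2,3)[OF qinv p(1) x] by auto
  show "depends m A (fst p' x) \<and> nrm m A (fst p' x) \<le> 1"
    using unit_dep[OF loc d(1)] unit_nrm[OF uni loc, of "fst p x"] d(2) p(2) unfolding uA_def by simp
next
  fix p' y assume p': "p' \<in> set (map (uA m U) ts)" and y: "y \<in> cube n"
  then obtain p where p: "p \<in> set ts" "p' = uA m U p" by auto
  show "depends m (- A) (snd p' y) \<and> nrm m (- A) (snd p' y) \<le> 1"
    using invD(4,5)[OF qinv p(1) y] p(2) unfolding uA_def by simp
next
  fix x y b assume x: "x \<in> cube n" and y: "y \<in> cube n" and b: "b \<in> cube m"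
  have "apply_op m U (\<Psi> x y) b = (\<Sum>b'\<in>cube m. U b b' * (\<Sum>p\<leftarrow>ts. fst p x b' * snd p y b'))"
    unfolding apply_op_def using invD(6)[OF qinv x y] by (intro sum.cong refl) auto
  also have "\<dots> = (\<Sum>p\<leftarrow>ts. \<Sum>b'\<in>cube m. U b b' * (fst p x b' * snd p y b'))"
    by (simp add: sum_list_const_mult[symmetric] sum_list_swap_sum[symmetric])
  also have "\<dots> = (\<Sum>p\<leftarrow>ts. (\<Sum>b'\<in>cube m. U b b' * fst p x b') * snd p y b)"
  proof (rule arg_cong[where f=sum_list], rule map_cong[OF refl])
    fix p assume p: "p \<in> set ts"
    have "depends m (- A) (snd p y)" using invD(4)[OF qinv p y] .
    then show "(\<Sum>b'\<in>cube m. U b b' * (fst p x b' * snd p y b')) = (\<Sum>b'\<in>cube m. U b b' * fst p x b') * snd p y b"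
      by (rule unit_step[OF loc b])
  qed
  also have "\<dots> = (\<Sum>p\<leftarrow>map (uA m U) ts. fst p x b * snd p y b)"
    by (simp add: uA_def o_def)
  finally show "apply_op m U (\<Psi> x y) b = (\<Sum>p\<leftarrow>map (uA m U) ts. fst p x b * snd p y b)" .
qed



lemma inv_unitaryB:
  assumes qinv: "qinv n m A ts \<Psi>" and uni: "unitary_op m U" and loc: "local_op m ({0..<m} - A) U"
  shows "qinv n m A (map (uB m U) ts) (\<lambda>x y. apply_op m U (\<Psi> x y))"
proof (rule invI)
  show A: "A \<subseteq> {0..<m}" using invD(1)[OF qinv] .
  have c1: "depends m (- A) g = depends m ({0..<m} - A) g" for g by (rule depends_cong) auto
  have c2: "nrm m (- A) g = nrm m ({0..<m} - A) g" for g by (rule nrm_cong) auto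
  have c3: "depends m A g = depends m (- ({0..<m} - A)) g" for g by (rule depends_cong) auto
  {
    fix p' x assume p': "p' \<in> set (map (uB m U) ts)" and x: "x \<in> cube n"
    then obtain p where p: "p \<in> set ts" "p' = uB m U p" by auto
    show "depends m A (fst p' x) \<and> nrm m A (fst p' x) \<le> 1"
      using invD(2,3)[OF qinv p(1) x] p(2) unfolding uB_def by simp
  next
    fix p' y assume p': "p' \<in> set (map (uB m U) ts)" and y: "y \<in> cube n"
    then obtain p where p: "p \<in> set ts" "p' = uB m U p" by auto
    have d: "depends m ({0..<m} - A) (snd p y)" "nrm m ({0..<m} - A) (snd p y) \<le> 1"
      using invD(4,5)[OF qinv p(1) y] c1 c2 by auto
    show "depends m (- A) (snd p' y) \<and> nrm m (- A) (snd p' y) \<le> 1"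
      using unit_dep[OF loc d(1)] unit_nrm[OF uni loc, of "snd p y"] d(2) p(2) c1 c2 unfolding uB_def by simp
  next
    fix x y b assume x: "x \<in> cube n" and y: "y \<in> cube n" and b: "b \<in> cube m"
    have "apply_op m U (\<Psi> x y) b = (\<Sum>b'\<in>cube m. U b b' * (\<Sum>p\<leftarrow>ts. snd p y b' * fst p x b'))"
      unfolding apply_op_def using invD(6)[OF qinv x y] by (intro sum.cong refl) (auto simp: mult.commute)
    also have "\<dots> = (\<Sum>p\<leftarrow>ts. \<Sum>b'\<in>cube m. U b b' * (snd p y b' * fst p x b'))"
      by (simp add: sum_list_const_mult[symmetric] sum_list_swap_sum[symmetric])
    also have "\<dots> = (\<Sum>p\<leftarrow>ts. (\<Sum>b'\<in>cube m. U b b' * snd p y b') * fst p x b)"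
    proof (rule arg_cong[where f=sum_list], rule map_cong[OF refl])
      fix p assume p: "p \<in> set ts"
      have "depends m (- ({0..<m} - A)) (fst p x)" using invD(2)[OF qinv p x] c3 by simp
      then show "(\<Sum>b'\<in>cube m. U b b' * (snd p y b' * fst p x b')) = (\<Sum>b'\<in>cube m. U b b' * snd p y b') * fst p x b"
        by (rule unit_step[OF loc b])
    qed
    also have "\<dots> = (\<Sum>p\<leftarrow>map (uB m U) ts. fst p x b * snd p y b)"
      by (simp add: uB_def o_def mult.commute)
    finally show "apply_op m U (\<Psi> x y) b = (\<Sum>p\<leftarrow>map (uB m U) ts. fst p x b * snd p y b)" .
  }
qed

lemma inv_splitA:
  assumes qinv: "qinv n m A ts \<Psi>" and q: "q \<in> A"
  shows "qinv n m (A - {q}) (map (sA q True) ts @ map (sA q False) ts) \<Psi>"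
proof (rule invI)
  have A: "A \<subseteq> {0..<m}" using invD(1)[OF qinv] .
  then have qm: "q < m" using q by auto
  show "A - {q} \<subseteq> {0..<m}" using A by auto
  {
    fix p' x assume p': "p' \<in> set (map (sA q True) ts @ map (sA q False) ts)" and x: "x \<in> cube n"
    then obtain p v where p: "p \<in> set ts" "p' = sA q v p" by auto
    show "depends m (A - {q}) (fst p' x) \<and> nrm m (A - {q}) (fst p' x) \<le> 1"
      using split_dep1[OF q qm invD(2)[OF qinv p(1) x], of v] split_nrm1[OF q qm, of "fst p x" v]
        invD(3)[OF qinv p(1) x] p(2) unfolding sA_def by simp
  next
    fix p' y assume p': "p' \<in> set (map (sA q True) ts @ map (sA q False) ts)" and y: "y \<in> cube n"
    then obtain p v where p: "p \<in> set ts" "p' = sA q v p" by auto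
    show "depends m (- (A - {q})) (snd p' y) \<and> nrm m (- (A - {q})) (snd p' y) \<le> 1"
      using split_dep2[OF q qm invD(4)[OF qinv p(1) y], of v] split_nrm2[OF q qm invD(4)[OF qinv p(1) y], of v]
        invD(5)[OF qinv p(1) y] p(2) unfolding sA_def by simp
  next
    fix x y b assume x: "x \<in> cube n" and y: "y \<in> cube n" and b: "b \<in> cube m"
    have "\<Psi> x y b = (\<Sum>p\<leftarrow>ts. fst (sA q True p) x b * snd (sA q True p) y b
                                + fst (sA q False p) x b * snd (sA q False p) y b)"
      unfolding invD(6)[OF qinv x y b] sA_def fst_conv snd_conv
      by (rule arg_cong[where f=sum_list], rule map_cong[OF refl]) (rule split_sum)
    also have "\<dots> = (\<Sum>p\<leftarrow>map (sA q True) ts @ map (sA q False) ts. fst p x b * snd p y b)"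
      by (simp add: sum_list_addf o_def)
    finally show "\<Psi> x y b = (\<Sum>p\<leftarrow>map (sA q True) ts @ map (sA q False) ts. fst p x b * snd p y b)" .
  }
qed

lemma inv_splitB:
  assumes qinv: "qinv n m A ts \<Psi>" and q: "q \<in> {0..<m} - A"
  shows "qinv n m (A \<union> {q}) (map (sB q True) ts @ map (sB q False) ts) \<Psi>"
proof (rule invI)
  have A: "A \<subseteq> {0..<m}" using invD(1)[OF qinv] .
  have qm: "q < m" using q by auto
  show "A \<union> {q} \<subseteq> {0..<m}" using A qm by auto
  let ?S = "{0..<m} - A"
  have c1: "depends m (- A) g = depends m ?S g" for g by (rule depends_cong) auto
  have c2: "nrm m (- A) g = nrm m ?S g" for g by (rule nrm_cong) auto
  have c3: "depends m A g = depends m (- ?S) g" for g by (rule depends_cong) auto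
  have c4: "nrm m A g = nrm m (- ?S) g" for g by (rule nrm_cong) auto
  have c5: "depends m (- (A \<union> {q})) g = depends m (?S - {q}) g" for g by (rule depends_cong) auto
  have c6: "nrm m (- (A \<union> {q})) g = nrm m (?S - {q}) g" for g by (rule nrm_cong) auto
  have c7: "depends m (A \<union> {q}) g = depends m (- (?S - {q})) g" for g by (rule depends_cong) auto
  have c8: "nrm m (A \<union> {q}) g = nrm m (- (?S - {q})) g" for g by (rule nrm_cong) auto
  {
    fix p' x assume p': "p' \<in> set (map (sB q True) ts @ map (sB q False) ts)" and x: "x \<in> cube n"
    then obtain p v where p: "p \<in> set ts" "p' = sB q v p" by auto
    have d: "depends m (- ?S) (fst p x)" "nrm m (- ?S) (fst p x) \<le> 1"
      using invD(2,3)[OF qinv p(1) x] c3 c4 by auto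
    show "depends m (A \<union> {q}) (fst p' x) \<and> nrm m (A \<union> {q}) (fst p' x) \<le> 1"
      using split_dep2[OF q qm d(1), of v] split_nrm2[OF q qm d(1), of v] d(2) p(2) c7 c8
      unfolding sB_def by simp
  next
    fix p' y assume p': "p' \<in> set (map (sB q True) ts @ map (sB q False) ts)" and y: "y \<in> cube n"
    then obtain p v where p: "p \<in> set ts" "p' = sB q v p" by auto
    have d: "depends m ?S (snd p y)" "nrm m ?S (snd p y) \<le> 1"
      using invD(4,5)[OF qinv p(1) y] c1 c2 by auto
    show "depends m (- (A \<union> {q})) (snd p' y) \<and> nrm m (- (A \<union> {q})) (snd p' y) \<le> 1"
      using split_dep1[OF q qm d(1), of v] split_nrm1[OF q qm, of "snd p y" v] d(2) p(2) c5 c6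
      unfolding sB_def by simp
  next
    fix x y b assume x: "x \<in> cube n" and y: "y \<in> cube n" and b: "b \<in> cube m"
    have "\<Psi> x y b = (\<Sum>p\<leftarrow>ts. fst (sB q True p) x b * snd (sB q True p) y b
                                + fst (sB q False p) x b * snd (sB q False p) y b)"
    proof -
      have "snd p y b * fst p x b = snd p y (b[q:=True]) * (if b ! q = True then fst p x b else 0)
             + snd p y (b[q:=False]) * (if b ! q = False then fst p x b else 0)" for p :: qterm
        by (rule split_sum)
      then show ?thesis
        unfolding invD(6)[OF qinv x y b] sB_def fst_conv snd_conv
        by (intro arg_cong[where f=sum_list] map_cong refl) (simp add: mult.commute)
    qed
    also have "\<dots> = (\<Sum>p\<leftarrow>map (sB q True) ts @ map (sB q False) ts. fst p x b * snd p y b)"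
      by (simp add: sum_list_addf o_def)
    finally show "\<Psi> x y b = (\<Sum>p\<leftarrow>map (sB q True) ts @ map (sB q False) ts. fst p x b * snd p y b)" .
  }
qed

lemma inv_rounds:
  "valid_rounds m A rs \<Longrightarrow> qinv n m A ts \<Psi> \<Longrightarrow>
   \<exists>A' ts'. length ts' = 2 ^ length rs * length ts \<and> qinv n m A' ts' (\<lambda>x y. run_rounds m rs (\<Psi> x y))"
proof (induction rs arbitrary: A ts \<Psi>)
  case Nil
  then show ?case by auto
next
  case (Cons r rs)
  obtain p U q where r: "r = (p, U, q)" by (cases r) auto
  show ?case
  proof (cases p)
    case True
    then have v: "unitary_op m U" "local_op m A U" "q \<in> A" "valid_rounds m (A - {q}) rs"
      using Cons.prems(1) r by (auto simp: Let_def)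
    have i2: "qinv n m (A - {q}) (map (sA q True) (map (uA m U) ts) @ map (sA q False) (map (uA m U) ts))
        (\<lambda>x y. apply_op m U (\<Psi> x y))"
      by (rule inv_splitA[OF inv_unitaryA[OF Cons.prems(2) v(1,2)] v(3)])
    obtain A' ts' where "length ts' = 2 ^ length rs * (length ts + length ts)"
      "qinv n m A' ts' (\<lambda>x y. run_rounds m rs (apply_op m U (\<Psi> x y)))"
      using Cons.IH[OF v(4) i2] by auto
    then show ?thesis using r by (intro exI[of _ A'] exI[of _ ts']) (auto simp: algebra_simps)
  next
    case False
    then have v: "unitary_op m U" "local_op m ({0..<m} - A) U" "q \<in> {0..<m} - A" "valid_rounds m (A \<union> {q}) rs"
      using Cons.prems(1) r by (auto simp: Let_def)
    have i2: "qinv n m (A \<union> {q}) (map (sB q True) (map (uB m U) ts) @ map (sB q False) (map (uB m U) ts))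
        (\<lambda>x y. apply_op m U (\<Psi> x y))"
      by (rule inv_splitB[OF inv_unitaryB[OF Cons.prems(2) v(1,2)] v(3)])
    obtain A' ts' where "length ts' = 2 ^ length rs * (length ts + length ts)"
      "qinv n m A' ts' (\<lambda>x y. run_rounds m rs (apply_op m U (\<Psi> x y)))"
      using Cons.IH[OF v(4) i2] by auto
    then show ?thesis using r by (intro exI[of _ A'] exI[of _ ts']) (auto simp: algebra_simps)
  qed
qed


definition qmask :: "nat \<Rightarrow> nat set \<Rightarrow> bool list \<Rightarrow> bool list" where
  "qmask m S b = map (\<lambda>i. i \<in> S \<and> b ! i) [0..<m]"

lemma sum_split:
  assumes dg: "depends m S g" and dh: "depends m (- S) h"
  shows "(\<Sum>b\<in>cube m. g b * h b) = (\<Sum>b\<in>Zs m S. g b) * (\<Sum>b\<in>Zs m (- S). h b)"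
proof -
  let ?\<phi> = "\<lambda>b. (qmask m S b, qmask m (- S) b)"
  have bij: "bij_betw ?\<phi> (cube m) (Zs m S \<times> Zs m (- S))"
  proof (rule bij_betwI')
    fix b1 b2 assume b: "b1 \<in> cube m" "b2 \<in> cube m"
    show "(?\<phi> b1 = ?\<phi> b2) = (b1 = b2)"
    proof
      assume e: "?\<phi> b1 = ?\<phi> b2"
      show "b1 = b2"
      proof (rule nth_equalityI)
        show "length b1 = length b2" using b by (simp add: cube_def)
        fix i assume i: "i < length b1"
        then have im: "i < m" using b by (simp add: cube_def)
        have "qmask m S b1 ! i = qmask m S b2 ! i" "qmask m (- S) b1 ! i = qmask m (- S) b2 ! i"
          using e by auto
        then show "b1 ! i = b2 ! i" using im by (cases "i \<in> S") (auto simp: qmask_def)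
      qed
    qed simp
  next
    fix b assume "b \<in> cube m"
    show "?\<phi> b \<in> Zs m S \<times> Zs m (- S)" by (auto simp: Zs_def qmask_def cube_def)
  next
    fix uv assume uv: "uv \<in> Zs m S \<times> Zs m (- S)"
    obtain u v where uv': "uv = (u, v)" by (cases uv)
    have u: "u \<in> cube m" "\<forall>i<m. i \<notin> S \<longrightarrow> \<not> u ! i" and v: "v \<in> cube m" "\<forall>i<m. i \<in> S \<longrightarrow> \<not> v ! i"
      using uv uv' by (auto simp: Zs_def)
    let ?b = "map (\<lambda>i. u ! i \<or> v ! i) [0..<m]"
    have "qmask m S ?b = u" using u v by (intro nth_equalityI) (auto simp: qmask_def cube_def)
    moreover have "qmask m (- S) ?b = v" using u v by (intro nth_equalityI) (auto simp: qmask_def cube_def)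
    moreover have "?b \<in> cube m" by (simp add: cube_def)
    ultimately have "?b \<in> cube m \<and> uv = ?\<phi> ?b" using uv' by simp
    then show "\<exists>b\<in>cube m. uv = ?\<phi> b" by blast
  qed
  have eq: "g b * h b = g (qmask m S b) * h (qmask m (- S) b)" if b: "b \<in> cube m" for b
  proof -
    have c: "qmask m S b \<in> cube m" "qmask m (- S) b \<in> cube m" by (auto simp: qmask_def cube_def)
    have "agreeOn m S b (qmask m S b)" "agreeOn m (- S) b (qmask m (- S) b)"
      by (auto simp: agreeOn_def qmask_def)
    then have "g b = g (qmask m S b)" "h b = h (qmask m (- S) b)"
      using dg dh b c unfolding depends_def by blast+
    then show ?thesis by simp
  qed
  have "(\<Sum>b\<in>cube m. g b * h b) = (\<Sum>b\<in>cube m. (\<lambda>uv. g (fst uv) * h (snd uv)) (?\<phi> b))"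
    by (rule sum.cong[OF refl]) (simp add: eq)
  also have "\<dots> = (\<Sum>uv\<in>Zs m S \<times> Zs m (- S). g (fst uv) * h (snd uv))"
    by (rule sum.reindex_bij_betw[OF bij])
  also have "\<dots> = (\<Sum>b\<in>Zs m S. g b) * (\<Sum>b\<in>Zs m (- S). h b)"
    by (simp add: sum_product sum.cartesian_product split_def)
  finally show ?thesis .
qed

lemma cmod_prod_le: "cmod (\<Sum>b\<in>D. c b * a b * cnj (a' b)) \<le> (nrm_sum + nrm_sum') / 2"
  if "\<And>b. cmod (c b) \<le> 1" "nrm_sum = (\<Sum>b\<in>D. (cmod (a b))\<^sup>2)" "nrm_sum' = (\<Sum>b\<in>D. (cmod (a' b))\<^sup>2)"
  for D :: "bool list set" and c a a' :: "bool list \<Rightarrow> complex" and nrm_sum nrm_sum' :: real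
proof -
  have "cmod (\<Sum>b\<in>D. c b * a b * cnj (a' b)) \<le> (\<Sum>b\<in>D. cmod (c b * a b * cnj (a' b)))"
    by (rule norm_sum)
  also have "\<dots> \<le> (\<Sum>b\<in>D. ((cmod (a b))\<^sup>2 + (cmod (a' b))\<^sup>2) / 2)"
  proof (rule sum_mono)
    fix b
    have "cmod (c b * a b * cnj (a' b)) = cmod (c b) * (cmod (a b) * cmod (a' b))"
      by (simp add: norm_mult)
    also have "\<dots> \<le> 1 * (cmod (a b) * cmod (a' b))"
      using that(1)[of b] by (intro mult_right_mono) auto
    also have "\<dots> \<le> ((cmod (a b))\<^sup>2 + (cmod (a' b))\<^sup>2) / 2"
    proof -
      have "0 \<le> (cmod (a b) - cmod (a' b))\<^sup>2" by simp
      then show ?thesis by (simp add: power2_diff)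
    qed
    finally show "cmod (c b * a b * cnj (a' b)) \<le> ((cmod (a b))\<^sup>2 + (cmod (a' b))\<^sup>2) / 2" .
  qed
  also have "\<dots> = (nrm_sum + nrm_sum') / 2"
    using that(2,3) by (simp only: sum_divide_distrib[symmetric] sum.distrib)
  finally show ?thesis .
qed


lemma dec_sum_list: "(\<And>t. t \<in> set L \<Longrightarrow> dec n (W t) (F t)) \<Longrightarrow> dec n (\<Sum>t\<leftarrow>L. W t) (\<lambda>x y. \<Sum>t\<leftarrow>L. F t x y)"
proof (induction L)
  case Nil then show ?case using dec_zero by simp
next
  case (Cons a L)
  then show ?case using dec_add[of n "W a" "F a" "\<Sum>t\<leftarrow>L. W t" "\<lambda>x y. \<Sum>t\<leftarrow>L. F t x y"] by simp
qed

lemma Re_sum_list: "Re (\<Sum>p\<leftarrow>L. f p) = (\<Sum>p\<leftarrow>L. Re (f p))"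
  by (induction L) auto

lemma cnj_sum_list: "cnj (\<Sum>p\<leftarrow>L. f p) = (\<Sum>p\<leftarrow>L. cnj (f p))"
  by (induction L) auto

lemma sum_list_mult_sum_list: "(\<Sum>p\<leftarrow>L. f p) * (\<Sum>q\<leftarrow>L'. g q) = (\<Sum>p\<leftarrow>L. \<Sum>q\<leftarrow>L'. f p * (g q :: complex))"
proof -
  have "(\<Sum>p\<leftarrow>L. f p) * (\<Sum>q\<leftarrow>L'. g q) = (\<Sum>p\<leftarrow>L. f p * (\<Sum>q\<leftarrow>L'. g q))"
    by (rule sum_list_mult_const[symmetric])
  also have "\<dots> = (\<Sum>p\<leftarrow>L. \<Sum>q\<leftarrow>L'. f p * (g q :: complex))"
    by (simp only: sum_list_const_mult[symmetric])
  finally show ?thesis .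
qed

lemma extract_dec:
  assumes qinv: "qinv n m A ts \<Psi>" and out: "out < m"
  shows "dec n (2 * (real (length ts) * real (length ts))) (\<lambda>x y. meas_prob m out (\<Psi> x y) True)"
proof -
  define ind where "ind b = (if b ! out then 1 else 0 :: complex)" for b
  define iA where "iA b = (if out \<in> A then ind b else 1)" for b
  define iB where "iB b = (if out \<in> A then 1 else ind b)" for b
  define G where "G p q x = (\<Sum>b\<in>Zs m A. iA b * fst p x b * cnj (fst q x b))" for p q :: qterm and x
  define H where "H p q y = (\<Sum>b\<in>Zs m (- A). iB b * snd p y b * cnj (snd q y b))" for p q :: qterm and y
  have iAB: "ind b = iA b * iB b" for b by (simp add: iA_def iB_def)
  have ciA: "cmod (iA b) \<le> 1" "cmod (iB b) \<le> 1" for b by (auto simp: iA_def iB_def ind_def)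
  have dA: "depends m A iA" unfolding depends_def agreeOn_def iA_def ind_def using out by auto
  have dB: "depends m (- A) iB" unfolding depends_def agreeOn_def iB_def ind_def using out by auto
  have depmult: "depends m S (\<lambda>b. f1 b * f2 b * cnj (f3 b))"
    if "depends m S f1" "depends m S f2" "depends m S f3" for S f1 f2 f3
    using that unfolding depends_def by metis
  have main: "complex_of_real (meas_prob m out (\<Psi> x y) True) = (\<Sum>p\<leftarrow>ts. \<Sum>q\<leftarrow>ts. G p q x * H p q y)"
    if x: "x \<in> cube n" and y: "y \<in> cube n" for x y
  proof -
    have "complex_of_real (meas_prob m out (\<Psi> x y) True)
        = (\<Sum>b\<in>{b\<in>cube m. b ! out = True}. \<Psi> x y b * cnj (\<Psi> x y b))"
      unfolding meas_prob_def by (simp only: of_real_sum complex_norm_square)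
    also have "\<dots> = (\<Sum>b\<in>cube m. ind b * (\<Psi> x y b * cnj (\<Psi> x y b)))"
    proof -
      have "(\<Sum>b\<in>{b\<in>cube m. b ! out = True}. \<Psi> x y b * cnj (\<Psi> x y b))
          = (\<Sum>b\<in>cube m. if b ! out = True then \<Psi> x y b * cnj (\<Psi> x y b) else 0)"
        by (rule sum.inter_filter) simp
      also have "\<dots> = (\<Sum>b\<in>cube m. ind b * (\<Psi> x y b * cnj (\<Psi> x y b)))"
        by (rule sum.cong[OF refl]) (simp add: ind_def)
      finally show ?thesis .
    qed
    also have "\<dots> = (\<Sum>b\<in>cube m. \<Sum>p\<leftarrow>ts. \<Sum>q\<leftarrow>ts.
          (iA b * fst p x b * cnj (fst q x b)) * (iB b * snd p y b * cnj (snd q y b)))"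
    proof (rule sum.cong[OF refl])
      fix b assume b: "b \<in> cube m"
      have "ind b * (\<Psi> x y b * cnj (\<Psi> x y b))
          = ind b * ((\<Sum>p\<leftarrow>ts. fst p x b * snd p y b) * (\<Sum>q\<leftarrow>ts. cnj (fst q x b * snd q y b)))"
        using invD(6)[OF qinv x y b] by (simp only: cnj_sum_list)
      also have "\<dots> = ind b * (\<Sum>p\<leftarrow>ts. \<Sum>q\<leftarrow>ts. (fst p x b * snd p y b) * cnj (fst q x b * snd q y b))"
        by (simp only: sum_list_mult_sum_list)
      also have "\<dots> = (\<Sum>p\<leftarrow>ts. \<Sum>q\<leftarrow>ts. ind b * ((fst p x b * snd p y b) * cnj (fst q x b * snd q y b)))"
        by (simp only: sum_list_const_mult[symmetric])
      also have "\<dots> = (\<Sum>p\<leftarrow>ts. \<Sum>q\<leftarrow>ts.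
          (iA b * fst p x b * cnj (fst q x b)) * (iB b * snd p y b * cnj (snd q y b)))"
        by (simp add: iAB ac_simps)
      finally show "ind b * (\<Psi> x y b * cnj (\<Psi> x y b)) = \<dots>" .
    qed
    also have "\<dots> = (\<Sum>p\<leftarrow>ts. \<Sum>q\<leftarrow>ts. \<Sum>b\<in>cube m.
          (iA b * fst p x b * cnj (fst q x b)) * (iB b * snd p y b * cnj (snd q y b)))"
      by (simp add: sum_list_swap_sum)
    also have "\<dots> = (\<Sum>p\<leftarrow>ts. \<Sum>q\<leftarrow>ts. G p q x * H p q y)"
    proof (intro arg_cong[where f=sum_list] map_cong refl)
      fix p q assume p: "p \<in> set ts" and q: "q \<in> set ts"
      show "(\<Sum>b\<in>cube m. (iA b * fst p x b * cnj (fst q x b)) * (iB b * snd p y b * cnj (snd q y b)))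
          = G p q x * H p q y"
        unfolding G_def H_def
        by (rule sum_split[OF depmult[OF dA invD(2)[OF qinv p x] invD(2)[OF qinv q x]]
                              depmult[OF dB invD(4)[OF qinv p y] invD(4)[OF qinv q y]]])
    qed
    finally show ?thesis .
  qed
  have bG: "cmod (G p q x) \<le> 1" if "p \<in> set ts" "q \<in> set ts" "x \<in> cube n" for p q x
  proof -
    have "cmod (G p q x) \<le> (nrm m A (fst p x) + nrm m A (fst q x)) / 2"
      unfolding G_def by (rule cmod_prod_le) (auto simp: ciA nrm_def)
    also have "\<dots> \<le> (1 + 1) / 2" using invD(3)[OF qinv] that by (intro divide_right_mono add_mono) auto
    finally show ?thesis by simp
  qed
  have bH: "cmod (H p q y) \<le> 1" if "p \<in> set ts" "q \<in> set ts" "y \<in> cube n" for p q y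
  proof -
    have "cmod (H p q y) \<le> (nrm m (- A) (snd p y) + nrm m (- A) (snd q y)) / 2"
      unfolding H_def by (rule cmod_prod_le) (auto simp: ciA nrm_def)
    also have "\<dots> \<le> (1 + 1) / 2" using invD(5)[OF qinv] that by (intro divide_right_mono add_mono) auto
    finally show ?thesis by simp
  qed
  have dpq: "dec n 2 (\<lambda>x y. Re (G p q x) * Re (H p q y) - Im (G p q x) * Im (H p q y))"
    if p: "p \<in> set ts" and q: "q \<in> set ts" for p q
  proof -
    have a1: "\<bar>Re (G p q x)\<bar> \<le> 1" "\<bar>Im (G p q x)\<bar> \<le> 1" if "x \<in> cube n" for x
      using bG[OF p q that] abs_Re_le_cmod abs_Im_le_cmod order_trans by blast+
    have a2: "\<bar>Re (H p q y)\<bar> \<le> 1" "\<bar>Im (H p q y)\<bar> \<le> 1" if "y \<in> cube n" for y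
      using bH[OF p q that] abs_Re_le_cmod abs_Im_le_cmod order_trans by blast+
    have "dec n (\<bar>1\<bar> + \<bar>-1\<bar>) (\<lambda>x y. 1 * Re (G p q x) * Re (H p q y) + (-1) * Im (G p q x) * Im (H p q y))"
      by (rule dec_add[OF dec_term dec_term]) (use a1 a2 in auto)
    then show ?thesis by simp
  qed
  have "dec n (\<Sum>p\<leftarrow>ts. \<Sum>q\<leftarrow>ts. 2)
      (\<lambda>x y. \<Sum>p\<leftarrow>ts. \<Sum>q\<leftarrow>ts. Re (G p q x) * Re (H p q y) - Im (G p q x) * Im (H p q y))"
    by (intro dec_sum_list dpq)
  then have "dec n (2 * (real (length ts) * real (length ts)))
      (\<lambda>x y. \<Sum>p\<leftarrow>ts. \<Sum>q\<leftarrow>ts. Re (G p q x) * Re (H p q y) - Im (G p q x) * Im (H p q y))"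
    by (simp add: sum_list_triv algebra_simps)
  then show ?thesis
  proof (rule dec_cong)
    fix x y assume x: "x \<in> cube n" and y: "y \<in> cube n"
    have "meas_prob m out (\<Psi> x y) True = Re (complex_of_real (meas_prob m out (\<Psi> x y) True))" by simp
    also have "\<dots> = (\<Sum>p\<leftarrow>ts. \<Sum>q\<leftarrow>ts. Re (G p q x) * Re (H p q y) - Im (G p q x) * Im (H p q y))"
      unfolding main[OF x y] by (simp add: Re_sum_list)
    finally show "(\<Sum>p\<leftarrow>ts. \<Sum>q\<leftarrow>ts. Re (G p q x) * Re (H p q y) - Im (G p q x) * Im (H p q y))
        = meas_prob m out (\<Psi> x y) True" by simp
  qed
qed


lemma s0_len: "x \<in> cube n \<Longrightarrow> y \<in> cube n \<Longrightarrow> 2 * n \<le> m \<Longrightarrow>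
    length (x @ y @ replicate (m - length x - length y) False) = m"
  by (auto simp: cube_def)

lemma s0_nth: "x \<in> cube n \<Longrightarrow> y \<in> cube n \<Longrightarrow> i < m \<Longrightarrow> 2 * n \<le> m \<Longrightarrow>
    (x @ y @ replicate (m - length x - length y) False) ! i = (if i < n then x ! i else if i < 2 * n then y ! (i - n) else False)"
  by (auto simp: cube_def nth_append)

lemma init_norm:
  assumes "x \<in> cube n" "y \<in> cube n" "2 * n \<le> m"
  shows "(\<Sum>b\<in>cube m. (cmod (init_state m x y b))\<^sup>2) = 1"
proof -
  let ?s = "x @ y @ replicate (m - length x - length y) False"
  have s: "?s \<in> cube m" using s0_len[OF assms] by (simp add: cube_def)
  have "(\<Sum>b\<in>cube m. (cmod (init_state m x y b))\<^sup>2) = (\<Sum>b\<in>cube m. if b = ?s then 1 else 0)"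
    by (rule sum.cong[OF refl]) (simp add: init_state_def)
  also have "\<dots> = 1" using s by (simp add: sum.delta')
  finally show ?thesis .
qed

lemma run_norm:
  "valid_rounds m A rs \<Longrightarrow> (\<Sum>b\<in>cube m. (cmod (run_rounds m rs \<psi> b))\<^sup>2) = (\<Sum>b\<in>cube m. (cmod (\<psi> b))\<^sup>2)"
proof (induction rs arbitrary: A \<psi>)
  case Nil then show ?case by simp
next
  case (Cons r rs)
  obtain p U q where r: "r = (p, U, q)" by (cases r) auto
  have u: "unitary_op m U" using Cons.prems r by (auto simp: Let_def)
  have v: "valid_rounds m (if p then A - {q} else A \<union> {q}) rs" using Cons.prems r by (auto simp: Let_def)
  have "(\<Sum>b\<in>cube m. (cmod (run_rounds m (r # rs) \<psi> b))\<^sup>2) = (\<Sum>b\<in>cube m. (cmod (apply_op m U \<psi> b))\<^sup>2)"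
    using Cons.IH[OF v] r by simp
  also have "\<dots> = (\<Sum>b\<in>cube m. (cmod (\<psi> b))\<^sup>2)"
    unfolding apply_op_def
    by (rule isometry[OF finite_cube]) (use u in \<open>auto simp: unitary_op_def\<close>)
  finally show ?case .
qed

lemma meas_sum: "meas_prob m out \<psi> True + meas_prob m out \<psi> False = (\<Sum>b\<in>cube m. (cmod (\<psi> b))\<^sup>2)"
proof -
  have "meas_prob m out \<psi> True + meas_prob m out \<psi> False
      = (\<Sum>b\<in>cube m. if b ! out = True then (cmod (\<psi> b))\<^sup>2 else 0) + (\<Sum>b\<in>cube m. if b ! out = False then (cmod (\<psi> b))\<^sup>2 else 0)"
    unfolding meas_prob_def by (simp only: sum.inter_filter[OF finite_cube])
  also have "\<dots> = (\<Sum>b\<in>cube m. (cmod (\<psi> b))\<^sup>2)"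
    by (simp only: sum.distrib[symmetric]) (rule sum.cong, auto)
  finally show ?thesis .
qed

lemma meas_nonneg: "0 \<le> meas_prob m out \<psi> v"
  unfolding meas_prob_def by (rule sum_nonneg) simp

lemma nrm_ind:
  assumes "\<And>b. b \<in> Zs m S \<Longrightarrow> P b \<Longrightarrow> b = t"
  shows "nrm m S (\<lambda>b. if P b then 1 else 0) \<le> 1"
proof -
  have "nrm m S (\<lambda>b. if P b then 1 else 0) = (\<Sum>b\<in>Zs m S. if P b then 1 else 0)"
    unfolding nrm_def by (rule sum.cong[OF refl]) simp
  also have "\<dots> = real (card {b\<in>Zs m S. P b})"
    by (simp add: sum.inter_filter[symmetric])
  also have "\<dots> \<le> real (card {t})"
    using assms by (intro of_nat_mono card_mono) auto
  finally show ?thesis by simp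
qed

lemma if_conj_mult: "(if P \<and> Q then 1 else 0 :: complex) = (if P then 1 else 0) * (if Q then 1 else 0)"
  by auto

definition a0 :: "nat \<Rightarrow> nat \<Rightarrow> nat set \<Rightarrow> bool list \<Rightarrow> bool list \<Rightarrow> complex" where
  "a0 n m A0 x b = (if \<forall>i<m. i \<in> A0 \<longrightarrow> b ! i = (i < n \<and> x ! i) then 1 else 0)"
definition b0 :: "nat \<Rightarrow> nat \<Rightarrow> nat set \<Rightarrow> bool list \<Rightarrow> bool list \<Rightarrow> complex" where
  "b0 n m A0 y b = (if \<forall>i<m. i \<notin> A0 \<longrightarrow> b ! i = (n \<le> i \<and> i < 2 * n \<and> y ! (i - n)) then 1 else 0)"

lemma inv_init:
  assumes m: "2 * n \<le> m" and A1: "{0..<n} \<subseteq> A0" and A2: "A0 \<subseteq> {0..<m}" and A3: "A0 \<inter> {n..<2*n} = {}"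
  shows "qinv n m A0 [(a0 n m A0, b0 n m A0)] (\<lambda>x y. init_state m x y)"
proof (rule invI)
  show "A0 \<subseteq> {0..<m}" by (rule A2)
next
  fix p x assume p: "p \<in> set [(a0 n m A0, b0 n m A0)]" and x: "x \<in> cube n"
  have d: "depends m A0 (a0 n m A0 x)" unfolding depends_def agreeOn_def a0_def by auto
  have "nrm m A0 (a0 n m A0 x) \<le> 1" unfolding a0_def
  proof (rule nrm_ind)
    fix b assume b: "b \<in> Zs m A0" "\<forall>i<m. i \<in> A0 \<longrightarrow> b ! i = (i < n \<and> x ! i)"
    show "b = map (\<lambda>i. i \<in> A0 \<and> i < n \<and> x ! i) [0..<m]"
      using b by (intro nth_equalityI) (auto simp: Zs_def cube_def)
  qed
  then show "depends m A0 (fst p x) \<and> nrm m A0 (fst p x) \<le> 1" using d p by simp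
next
  fix p y assume p: "p \<in> set [(a0 n m A0, b0 n m A0)]" and y: "y \<in> cube n"
  have d: "depends m (- A0) (b0 n m A0 y)" unfolding depends_def agreeOn_def b0_def by auto
  have "nrm m (- A0) (b0 n m A0 y) \<le> 1" unfolding b0_def
  proof (rule nrm_ind)
    fix b assume b: "b \<in> Zs m (- A0)" "\<forall>i<m. i \<notin> A0 \<longrightarrow> b ! i = (n \<le> i \<and> i < 2 * n \<and> y ! (i - n))"
    show "b = map (\<lambda>i. i \<notin> A0 \<and> n \<le> i \<and> i < 2 * n \<and> y ! (i - n)) [0..<m]"
      using b by (intro nth_equalityI) (auto simp: Zs_def cube_def)
  qed
  then show "depends m (- A0) (snd p y) \<and> nrm m (- A0) (snd p y) \<le> 1" using d p by simp
next
  fix x y b assume x: "x \<in> cube n" and y: "y \<in> cube n" and b: "b \<in> cube m"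
  let ?s = "x @ y @ replicate (m - length x - length y) False"
  have ls: "length ?s = m" using s0_len[OF x y m] .
  have lb: "length b = m" using b by (simp add: cube_def)
  have "(b = ?s) \<longleftrightarrow> (\<forall>i<m. b ! i = ?s ! i)" using ls lb by (auto simp: list_eq_iff_nth_eq)
  also have "\<dots> \<longleftrightarrow> (\<forall>i<m. i \<in> A0 \<longrightarrow> b ! i = (i < n \<and> x ! i)) \<and>
                    (\<forall>i<m. i \<notin> A0 \<longrightarrow> b ! i = (n \<le> i \<and> i < 2 * n \<and> y ! (i - n)))"
  proof -
    have h: "?s ! i = (if i \<in> A0 then (i < n \<and> x ! i) else (n \<le> i \<and> i < 2 * n \<and> y ! (i - n)))"
      if "i < m" for i
      using s0_nth[OF x y that(1) m] that A1 A3 by auto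
    have "(\<forall>i<m. b ! i = ?s ! i) \<longleftrightarrow>
        (\<forall>i<m. b ! i = (if i \<in> A0 then (i < n \<and> x ! i) else (n \<le> i \<and> i < 2 * n \<and> y ! (i - n))))"
      using h by simp
    also have "\<dots> \<longleftrightarrow> (\<forall>i<m. i \<in> A0 \<longrightarrow> b ! i = (i < n \<and> x ! i)) \<and>
                    (\<forall>i<m. i \<notin> A0 \<longrightarrow> b ! i = (n \<le> i \<and> i < 2 * n \<and> y ! (i - n)))"
      by auto
    finally show ?thesis .
  qed
  finally have e: "(b = ?s) \<longleftrightarrow> \<dots>" .
  have "init_state m x y b = (if b = ?s then 1 else 0)" unfolding init_state_def by (rule refl)
  also have "\<dots> = (if (\<forall>i<m. i \<in> A0 \<longrightarrow> b ! i = (i < n \<and> x ! i)) \<and>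
                    (\<forall>i<m. i \<notin> A0 \<longrightarrow> b ! i = (n \<le> i \<and> i < 2 * n \<and> y ! (i - n))) then 1 else 0)"
    by (simp only: e)
  also have "\<dots> = a0 n m A0 x b * b0 n m A0 y b" unfolding a0_def b0_def by (rule if_conj_mult)
  finally show "init_state m x y b = (\<Sum>p\<leftarrow>[(a0 n m A0, b0 n m A0)]. fst p x b * snd p y b)" by simp
qed


lemma kappa_fo: "kappa1 n f E = (\<Sum>z\<in>E. \<bar>fo n (\<lambda>x y. if f x y then 1 else 0) z\<bar>)"
  unfolding kappa1_def by (simp add: fourier_fo)

lemma kappa_le_sqrt:
  assumes "E \<subseteq> cube n"
  shows "kappa1 n f E \<le> sqrt (kappa0 E)"
  using err_fourier[OF assms, of 1 "\<lambda>x y. if f x y then 1 else 0"]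
  unfolding kappa_fo kappa0_def by simp

lemma kappa_nonneg: "0 \<le> kappa1 n f E"
  unfolding kappa1_def by (rule sum_nonneg) simp

lemma kappa_bound:
  assumes comp: "computes n f m A0 rs out" and E: "E \<subseteq> cube n"
  shows "kappa1 n f E \<le> (4 * 4 ^ length rs + 1) ^ (2 * r) + (8/9) ^ r * sqrt (kappa0 E)"
proof -
  have m: "2 * n \<le> m" and A1: "{0..<n} \<subseteq> A0" and A2: "A0 \<subseteq> {0..<m}" and A3: "A0 \<inter> {n..<2*n} = {}"
    and out: "out < m" and val: "valid_rounds m A0 rs"
    and pr: "\<And>x y. x \<in> cube n \<Longrightarrow> y \<in> cube n \<Longrightarrow> meas_prob m out (run_rounds m rs (init_state m x y)) (f x y) \<ge> 2 / 3"
    using comp unfolding computes_def by auto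
  define \<Psi> where "\<Psi> x y = run_rounds m rs (init_state m x y)" for x y
  obtain A' ts' where l: "length ts' = 2 ^ length rs * length [(a0 n m A0, b0 n m A0)]"
    and iv: "qinv n m A' ts' \<Psi>"
    using inv_rounds[OF val inv_init[OF m A1 A2 A3]] unfolding \<Psi>_def by blast
  define P where "P x y = meas_prob m out (\<Psi> x y) True" for x y
  have "dec n (2 * (real (length ts') * real (length ts'))) P"
    unfolding P_def by (rule extract_dec[OF iv out])
  moreover have "real (length ts') * real (length ts') = 4 ^ length rs"
    using l by (simp add: power_mult_distrib[symmetric])
  ultimately have dP: "dec n (2 * 4 ^ length rs) P" by simp
  define F where "F x y = (if f x y then 1 else 0 :: real)" for x y
  have PF: "0 \<le> P x y \<and> P x y \<le> 1 \<and> \<bar>F x y - P x y\<bar> \<le> 1/3 \<and> (F x y = 0 \<or> F x y = 1)"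
    if x: "x \<in> cube n" and y: "y \<in> cube n" for x y
  proof -
    have s: "meas_prob m out (\<Psi> x y) True + meas_prob m out (\<Psi> x y) False = 1"
      unfolding meas_sum \<Psi>_def run_norm[OF val] using init_norm[OF x y m] .
    have n1: "0 \<le> meas_prob m out (\<Psi> x y) True" "0 \<le> meas_prob m out (\<Psi> x y) False"
      by (rule meas_nonneg)+
    have "meas_prob m out (\<Psi> x y) (f x y) \<ge> 2/3" using pr[OF x y] unfolding \<Psi>_def .
    then show ?thesis using s n1 unfolding P_def F_def by (cases "f x y") auto
  qed
  define Q where "Q x y = maj r (P x y)" for x y
  have dQ: "dec n ((2 * (2 * 4 ^ length rs) + 1) ^ (2 * r)) Q"
    unfolding Q_def by (rule dec_maj[OF dP])
  have eQ: "\<bar>F x y - Q x y\<bar> \<le> (8/9) ^ r" if "x \<in> cube n" "y \<in> cube n" for x y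
    unfolding Q_def using PF[OF that] by (intro maj_err) auto
  have "kappa1 n f E = (\<Sum>z\<in>E. \<bar>fo n F z\<bar>)" unfolding kappa_fo F_def ..
  also have "\<dots> = (\<Sum>z\<in>E. \<bar>fo n Q z + fo n (\<lambda>x y. F x y - Q x y) z\<bar>)"
    by (simp add: fo_diff)
  also have "\<dots> \<le> (\<Sum>z\<in>E. \<bar>fo n Q z\<bar> + \<bar>fo n (\<lambda>x y. F x y - Q x y) z\<bar>)"
    by (rule sum_mono) (rule abs_triangle_ineq)
  also have "\<dots> = (\<Sum>z\<in>E. \<bar>fo n Q z\<bar>) + (\<Sum>z\<in>E. \<bar>fo n (\<lambda>x y. F x y - Q x y) z\<bar>)"
    by (rule sum.distrib)
  also have "\<dots> \<le> (2 * (2 * 4 ^ length rs) + 1) ^ (2 * r) + (8/9) ^ r * sqrt (card E)"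
    by (intro add_mono dec_fourier[OF dQ E] err_fourier[OF E]) (auto simp: eQ)
  finally show ?thesis unfolding kappa0_def by simp
qed


lemma meas_init:
  assumes x: "x \<in> cube n" and y: "y \<in> cube n" and m: "2 * n \<le> m"
  shows "meas_prob m out (init_state m x y) v =
    (if (x @ y @ replicate (m - length x - length y) False) ! out = v then 1 else 0)"
proof -
  let ?s = "x @ y @ replicate (m - length x - length y) False"
  have s: "?s \<in> cube m" using s0_len[OF x y m] by (simp add: cube_def)
  have "meas_prob m out (init_state m x y) v = (\<Sum>b\<in>{b\<in>cube m. b ! out = v}. if b = ?s then 1 else 0)"
    unfolding meas_prob_def by (rule sum.cong[OF refl]) (simp add: init_state_def)
  also have "\<dots> = (if ?s \<in> {b\<in>cube m. b ! out = v} then 1 else 0)"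
    by (subst sum.delta) auto
  also have "\<dots> = (if ?s ! out = v then 1 else 0)" using s by simp
  finally show ?thesis .
qed

lemma kappa_t0:
  assumes comp: "computes n f m A0 [] out" and E: "E \<subseteq> cube n"
  shows "kappa1 n f E \<le> 1"
proof -
  have m: "2 * n \<le> m" and out: "out < m"
    and pr: "\<And>x y. x \<in> cube n \<Longrightarrow> y \<in> cube n \<Longrightarrow> meas_prob m out (init_state m x y) (f x y) \<ge> 2 / 3"
    using comp unfolding computes_def by auto
  define A where "A x = (if out < n then (if x ! out then 1 else 0) else 1 :: real)" for x
  define B where "B y = (if out < n then 1 else if out < 2 * n then (if y ! (out - n) then 1 else 0) else 0 :: real)" for y
  have eq: "(if f x y then 1 else 0) = 1 * A x * B y" if x: "x \<in> cube n" and y: "y \<in> cube n" for x y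
  proof -
    have "(x @ y @ replicate (m - length x - length y) False) ! out = f x y"
      using pr[OF x y] unfolding meas_init[OF x y m] by (auto split: if_splits)
    then have "f x y = (if out < n then x ! out else if out < 2 * n then y ! (out - n) else False)"
      using s0_nth[OF x y out m] by simp
    then show ?thesis unfolding A_def B_def by auto
  qed
  have "dec n \<bar>1\<bar> (\<lambda>x y. 1 * A x * B y)"
    by (rule dec_term) (auto simp: A_def B_def)
  then have d1: "dec n 1 (\<lambda>x y. 1 * A x * B y)" by simp
  have "dec n 1 (\<lambda>x y. if f x y then 1 else 0)"
    by (rule dec_cong[OF d1]) (simp add: eq)
  then show ?thesis unfolding kappa_fo by (rule dec_fourier[OF _ E])
qed

definition Idq :: qop where "Idq b b' = (if b = b' then 1 else 0)"

lemma unitary_Id: "unitary_op m Idq"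
  unfolding unitary_op_def Idq_def
proof (intro ballI)
  fix b b' assume b: "b \<in> cube m" and b': "b' \<in> cube m"
  have "(\<Sum>c\<in>cube m. cnj (if c = b then 1 else 0) * (if c = b' then 1 else 0))
      = (\<Sum>c\<in>cube m. if c = b then (if b = b' then 1 else 0) else (0::complex))"
    by (rule sum.cong[OF refl]) auto
  also have "\<dots> = (if b = b' then 1 else 0)" using b by (simp add: sum.delta')
  finally show "(\<Sum>c\<in>cube m. cnj (if c = b then 1 else 0) * (if c = b' then 1 else 0)) = (if b = b' then 1 else 0)" .
qed

lemma eq_iff_on:
  assumes "b \<in> cube m" "b' \<in> cube m"
  shows "b = b' \<longleftrightarrow> (\<forall>i<m. b ! i = b' ! i)"
  using assms by (auto simp: cube_def list_eq_iff_nth_eq)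

lemma local_Id: "local_op m S Idq"
  unfolding local_op_def
proof (intro conjI ballI impI)
  fix b b' :: "bool list" assume "\<exists>i<m. i \<notin> S \<and> b ! i \<noteq> b' ! i"
  then have "b \<noteq> b'" by auto
  then show "Idq b b' = 0" by (simp add: Idq_def)
next
  fix b b' c c' :: "bool list" assume cb: "b \<in> cube m" "b' \<in> cube m" "c \<in> cube m" "c' \<in> cube m"
    and h: "(\<forall>i\<in>S. b ! i = c ! i \<and> b' ! i = c' ! i) \<and> (\<forall>i<m. i \<notin> S \<longrightarrow> b ! i = b' ! i \<and> c ! i = c' ! i)"
  have "(\<forall>i<m. b ! i = b' ! i) \<longleftrightarrow> (\<forall>i<m. c ! i = c' ! i)"
  proof -
    have "b ! i = b' ! i \<longleftrightarrow> c ! i = c' ! i" if "i < m" for i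
      using h that by (cases "i \<in> S") auto
    then show ?thesis by blast
  qed
  then show "Idq b b' = Idq c c'" unfolding Idq_def using eq_iff_on[OF cb(1,2)] eq_iff_on[OF cb(3,4)] by simp
qed

lemma apply_Id: "(\<And>b. b \<notin> cube m \<Longrightarrow> \<psi> b = 0) \<Longrightarrow> apply_op m Idq \<psi> = \<psi>"
proof
  fix b assume z: "\<And>b. b \<notin> cube m \<Longrightarrow> \<psi> b = 0"
  have "apply_op m Idq \<psi> b = (\<Sum>b'\<in>cube m. if b = b' then \<psi> b' else 0)"
    unfolding apply_op_def Idq_def by (rule sum.cong[OF refl]) auto
  also have "\<dots> = \<psi> b" using z by (simp add: sum.delta)
  finally show "apply_op m Idq \<psi> b = \<psi> b" .
qed

definition idrounds :: "nat list \<Rightarrow> (bool \<times> qop \<times> nat) list" where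
  "idrounds L = map (\<lambda>i. (True, Idq, i)) L"

lemma run_idrounds: "(\<And>b. b \<notin> cube m \<Longrightarrow> \<psi> b = 0) \<Longrightarrow> run_rounds m (idrounds L @ rs) \<psi> = run_rounds m rs \<psi>"
  by (induction L) (auto simp: idrounds_def apply_Id)

lemma valid_idrounds:
  assumes "valid_rounds m {} rs"
  shows "k \<le> n \<Longrightarrow> valid_rounds m {k..<n} (idrounds [k..<n] @ rs)"
proof (induction "n - k" arbitrary: k)
  case 0
  then show ?case using assms by (simp add: idrounds_def)
next
  case (Suc d)
  then have k: "k < n" by simp
  have e: "[k..<n] = k # [Suc k..<n]" using k by (simp add: upt_conv_Cons)
  have e2: "{k..<n} - {k} = {Suc k..<n}" by auto
  have "valid_rounds m {Suc k..<n} (idrounds [Suc k..<n] @ rs)" using Suc k by simp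
  then show ?case using k unfolding e by (simp add: idrounds_def e2 unitary_Id local_Id)
qed


definition flipf :: "nat \<Rightarrow> (bool list \<Rightarrow> bool list \<Rightarrow> bool) \<Rightarrow> bool list \<Rightarrow> bool list" where
  "flipf n f b = b[2*n := (b ! (2*n) \<noteq> f (take n b) (take n (drop n b)))]"

definition Uf :: "nat \<Rightarrow> (bool list \<Rightarrow> bool list \<Rightarrow> bool) \<Rightarrow> qop" where
  "Uf n f b b' = (if b = flipf n f b' then 1 else 0)"

lemma flipf_len[simp]: "length (flipf n f b) = length b"
  by (simp add: flipf_def)

lemma flipf_take: "2 * n < length b \<Longrightarrow> take n (flipf n f b) = take n b"
  by (intro nth_equalityI) (auto simp: flipf_def nth_list_update)

lemma flipf_take_drop: "2 * n < length b \<Longrightarrow> take n (drop n (flipf n f b)) = take n (drop n b)"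
  by (intro nth_equalityI) (auto simp: flipf_def nth_list_update)

lemma flipf_flipf: "2 * n < length b \<Longrightarrow> flipf n f (flipf n f b) = b"
proof -
  assume l: "2 * n < length b"
  have "flipf n f (flipf n f b) = (flipf n f b)[2*n := (flipf n f b ! (2*n) \<noteq> f (take n b) (take n (drop n b)))]"
    unfolding flipf_def[of n f "flipf n f b"] flipf_take[OF l] flipf_take_drop[OF l] ..
  also have "\<dots> = b"
    using l by (intro nth_equalityI) (auto simp: flipf_def nth_list_update)
  finally show ?thesis .
qed

lemma unitary_Uf: "2 * n < m \<Longrightarrow> unitary_op m (Uf n f)"
  unfolding unitary_op_def
proof (intro ballI)
  fix b b' assume m: "2 * n < m" and b: "b \<in> cube m" and b': "b' \<in> cube m"
  have fb: "flipf n f b \<in> cube m" using b by (simp add: cube_def)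
  have "(\<Sum>c\<in>cube m. cnj (Uf n f c b) * Uf n f c b')
      = (\<Sum>c\<in>cube m. if c = flipf n f b then (if flipf n f b = flipf n f b' then 1 else 0) else (0::complex))"
    by (rule sum.cong[OF refl]) (auto simp: Uf_def)
  also have "\<dots> = (if flipf n f b = flipf n f b' then 1 else 0)" using fb by (simp add: sum.delta)
  also have "\<dots> = (if b = b' then 1 else 0)"
  proof -
    have "flipf n f b = flipf n f b' \<Longrightarrow> b = b'"
    proof -
      assume e: "flipf n f b = flipf n f b'"
      have "b = flipf n f (flipf n f b)" using flipf_flipf[of n b f] b m by (simp add: cube_def)
      also have "\<dots> = flipf n f (flipf n f b')" using e by simp
      also have "\<dots> = b'" using flipf_flipf[of n b' f] b' m by (simp add: cube_def)
      finally show "b = b'" .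
    qed
    then show ?thesis by auto
  qed
  finally show "(\<Sum>c\<in>cube m. cnj (Uf n f c b) * Uf n f c b') = (if b = b' then 1 else 0)" .
qed

lemma local_full: "local_op m ({0..<m} - {}) U"
  unfolding local_op_def
proof (intro conjI ballI impI)
  fix b b' :: "bool list" assume "\<exists>i<m. i \<notin> {0..<m} - {} \<and> b ! i \<noteq> b' ! i"
  then show "U b b' = 0" by auto
next
  fix b b' c c' :: "bool list" assume cb: "b \<in> cube m" "b' \<in> cube m" "c \<in> cube m" "c' \<in> cube m"
    and h: "(\<forall>i\<in>{0..<m} - {}. b ! i = c ! i \<and> b' ! i = c' ! i) \<and> (\<forall>i<m. i \<notin> {0..<m} - {} \<longrightarrow> b ! i = b' ! i \<and> c ! i = c' ! i)"
  have "b = c" using h eq_iff_on[OF cb(1,3)] by auto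
  moreover have "b' = c'" using h eq_iff_on[OF cb(2,4)] by auto
  ultimately show "U b b' = U c c'" by simp
qed

lemma exists_protocol: "\<exists>m A0 rs out. computes n f m A0 rs out"
proof -
  define m where "m = 2 * n + 1"
  define rs where "rs = idrounds [0..<n] @ [(False, Uf n f, 2 * n)]"
  have v0: "valid_rounds m {} [(False, Uf n f, 2 * n)]"
    using unitary_Uf[of n m f] local_full[of m "Uf n f"] by (simp add: m_def)
  have val: "valid_rounds m {0..<n} rs"
    unfolding rs_def using valid_idrounds[OF v0, of 0 n] by simp
  have pr: "meas_prob m (2 * n) (run_rounds m rs (init_state m x y)) (f x y) \<ge> 2 / 3"
    if x: "x \<in> cube n" and y: "y \<in> cube n" for x y
  proof -
    let ?s = "x @ y @ replicate (m - length x - length y) False"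
    have mm: "2 * n \<le> m" by (simp add: m_def)
    have s: "?s \<in> cube m" using s0_len[OF x y mm] by (simp add: cube_def)
    have z: "init_state m x y b = 0" if "b \<notin> cube m" for b
      using that s by (auto simp: init_state_def)
    have r: "run_rounds m rs (init_state m x y) = apply_op m (Uf n f) (init_state m x y)"
      unfolding rs_def using run_idrounds[of m "init_state m x y" "[0..<n]" "[(False, Uf n f, 2 * n)]"] z by simp
    have ap: "apply_op m (Uf n f) (init_state m x y) b = (if b = flipf n f ?s then 1 else 0)" for b
    proof -
      have "apply_op m (Uf n f) (init_state m x y) b = (\<Sum>b'\<in>cube m. if b' = ?s then Uf n f b b' else 0)"
        unfolding apply_op_def by (rule sum.cong[OF refl]) (simp add: init_state_def)
      also have "\<dots> = Uf n f b ?s" using s by (simp add: sum.delta)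
      finally show ?thesis by (simp add: Uf_def)
    qed
    have fs: "flipf n f ?s \<in> cube m" using s by (simp add: cube_def)
    have "meas_prob m (2 * n) (run_rounds m rs (init_state m x y)) (f x y)
        = (\<Sum>b\<in>{b\<in>cube m. b ! (2 * n) = f x y}. if b = flipf n f ?s then 1 else 0)"
      unfolding meas_prob_def r ap by (rule sum.cong[OF refl]) simp
    also have "\<dots> = (if flipf n f ?s \<in> {b\<in>cube m. b ! (2 * n) = f x y} then 1 else 0)"
      by (subst sum.delta) auto
    also have "\<dots> = 1"
    proof -
      have lx: "length x = n" "length y = n" using x y by (auto simp: cube_def)
      have "take n ?s = x" "take n (drop n ?s) = y" using lx by auto
      moreover have "?s ! (2 * n) = False" using s0_nth[OF x y _ mm, of "2 * n"] by (simp add: m_def)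
      moreover have "2 * n < length ?s" using s by (simp add: cube_def m_def)
      ultimately have "flipf n f ?s ! (2 * n) = f x y" by (simp add: flipf_def)
      then show ?thesis using fs by simp
    qed
    finally show ?thesis by simp
  qed
  have "computes n f m {0..<n} rs (2 * n)"
    unfolding computes_def using val pr by (auto simp: m_def)
  then show ?thesis by blast
qed

lemma BQC_attained: "\<exists>m A0 rs out. computes n f m A0 rs out \<and> length rs = BQC n f"
proof -
  obtain m A0 rs out where "computes n f m A0 rs out" using exists_protocol by blast
  then have "\<exists>k. \<exists>m A0 rs out. computes n f m A0 rs out \<and> length rs = k" by blast
  then show ?thesis unfolding BQC_def by (rule LeastI_ex)
qed


lemma eight_ninths: "((8::real)/9) ^ (6 * s) \<le> 1 / 2 ^ s"
proof -
  have "((8::real)/9) ^ 6 \<le> 1/2" by (simp add: power_divide)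
  then have "(((8::real)/9) ^ 6) ^ s \<le> (1/2) ^ s" by (intro power_mono) auto
  then show ?thesis by (simp add: power_mult power_divide)
qed

lemma main_bound:
  assumes E: "E \<subseteq> cube n"
  shows "kappa1 n f E \<le> 2 ^ (36 * (BQC n f + 1) * s) + sqrt (kappa0 E) / 2 ^ s"
proof -
  obtain m A0 rs out where c: "computes n f m A0 rs out" and l: "length rs = BQC n f"
    using BQC_attained by blast
  let ?t = "BQC n f"
  have k: "kappa1 n f E \<le> (4 * 4 ^ ?t + 1) ^ (2 * (6 * s)) + (8/9) ^ (6 * s) * sqrt (kappa0 E)"
    using kappa_bound[OF c E, of "6 * s"] l by simp
  have "(4 * 4 ^ ?t + 1 :: real) \<le> 2 ^ (2 * ?t + 3)"
  proof -
    have "(1::real) \<le> 4 ^ ?t" by simp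
    then have "(4 * 4 ^ ?t + 1 :: real) \<le> 8 * 4 ^ ?t" by linarith
    also have "\<dots> = 2 ^ (2 * ?t + 3)" by (simp add: power_add power_mult)
    finally show ?thesis .
  qed
  then have "(4 * 4 ^ ?t + 1 :: real) ^ (2 * (6 * s)) \<le> (2 ^ (2 * ?t + 3)) ^ (2 * (6 * s))"
    by (intro power_mono) auto
  also have "\<dots> = 2 ^ ((2 * ?t + 3) * (12 * s))" by (simp add: power_mult)
  also have "\<dots> \<le> 2 ^ (36 * (?t + 1) * s)"
    by (intro power_increasing) auto
  finally have a: "(4 * 4 ^ ?t + 1 :: real) ^ (2 * (6 * s)) \<le> 2 ^ (36 * (?t + 1) * s)" .
  have b: "(8/9) ^ (6 * s) * sqrt (kappa0 E) \<le> 1 / 2 ^ s * sqrt (kappa0 E)"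
    by (intro mult_right_mono eight_ninths) (simp add: kappa0_def)
  show ?thesis using k a b by simp
qed

lemma t0_bound:
  assumes E: "E \<subseteq> cube n" and t: "BQC n f = 0"
  shows "kappa1 n f E \<le> 1"
proof -
  obtain m A0 rs out where c: "computes n f m A0 rs out" and l: "length rs = BQC n f"
    using BQC_attained by blast
  then have "rs = []" using t by simp
  then show ?thesis using kappa_t0[OF _ E] c by simp
qed


lemma log_le_nat: "0 < (K::real) \<Longrightarrow> K \<le> 2 ^ k \<Longrightarrow> log 2 K \<le> real k"
  using log_mono[of 2 K "2 ^ k"] by simp

lemma part1:
  assumes c: "c > 0"
  shows "\<exists>C>0. \<exists>N. \<forall>n\<ge>N. \<forall>f E. E \<subseteq> cube n \<longrightarrow>
            kappa1 n f E \<ge> c * sqrt (kappa0 E) \<longrightarrow>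
            real (BQC n f) \<ge> C * log 2 (kappa1 n f E)"
proof -
  obtain s0 :: nat where s0: "2 / c < 2 ^ s0" using real_arch_pow[of 2 "2 / c"] by auto
  define C where "C = 1 / (1 + 72 * real s0)"
  have C: "C > 0" by (simp add: C_def add_pos_nonneg)
  have "\<forall>n\<ge>0. \<forall>f E. E \<subseteq> cube n \<longrightarrow>
            kappa1 n f E \<ge> c * sqrt (kappa0 E) \<longrightarrow>
            real (BQC n f) \<ge> C * log 2 (kappa1 n f E)"
  proof (intro allI impI)
    fix n f E assume E: "E \<subseteq> cube n" and h: "kappa1 n f E \<ge> c * sqrt (kappa0 E)"
    define K where "K = kappa1 n f E"
    define t where "t = BQC n f"
    have K0: "0 \<le> K" unfolding K_def by (rule kappa_nonneg)
    show "real (BQC n f) \<ge> C * log 2 (kappa1 n f E)"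
    proof (cases "K \<le> 1")
      case True
      have "log 2 K \<le> 0"
      proof (cases "K = 0")
        case False
        then show ?thesis using True K0 by simp
      qed (simp add: log_def)
      then have "C * log 2 K \<le> 0" using C by (simp add: mult_nonneg_nonpos)
      then show ?thesis unfolding K_def by simp
    next
      case False
      then have K1: "1 < K" by simp
      have t1: "1 \<le> t"
      proof (rule ccontr)
        assume "\<not> 1 \<le> t"
        then have "BQC n f = 0" unfolding t_def by simp
        then have "K \<le> 1" unfolding K_def by (rule t0_bound[OF E])
        then show False using K1 by simp
      qed
      have sq: "sqrt (kappa0 E) \<le> K / c" using h c unfolding K_def by (simp add: field_simps)
      have "sqrt (kappa0 E) / 2 ^ s0 \<le> (K / c) / 2 ^ s0" by (rule divide_right_mono[OF sq]) simp
      also have "\<dots> = K / (c * 2 ^ s0)" by simp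
      also have "\<dots> \<le> K / 2"
        using s0 c K0 by (intro divide_left_mono) (auto simp: field_simps)
      finally have b1: "sqrt (kappa0 E) / 2 ^ s0 \<le> K / 2" .
      have "K \<le> 2 ^ (36 * (t + 1) * s0) + sqrt (kappa0 E) / 2 ^ s0"
        using main_bound[OF E, of f s0] unfolding K_def t_def .
      then have "K \<le> 2 * 2 ^ (36 * (t + 1) * s0)" using b1 by linarith
      then have kb: "K \<le> 2 ^ (36 * (t + 1) * s0 + 1)" by (simp add: power_add)
      have L: "log 2 K \<le> real (36 * (t + 1) * s0 + 1)"
        by (rule log_le_nat[OF _ kb]) (use K1 in simp)
      have "real (36 * (t + 1) * s0 + 1) \<le> real t * (1 + 72 * real s0)"
      proof -
        have p: "real s0 * 1 \<le> real s0 * real t" using t1 by (intro mult_left_mono) auto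
        have e1: "real (36 * (t + 1) * s0 + 1) = 36 * (real s0 * real t) + 36 * real s0 + 1"
          by (simp add: algebra_simps)
        have e2: "real t * (1 + 72 * real s0) = real t + 72 * (real s0 * real t)"
          by (simp add: algebra_simps)
        show ?thesis unfolding e1 e2 using p t1 by linarith
      qed
      with L have "log 2 K \<le> real t * (1 + 72 * real s0)" by linarith
      then have "C * log 2 K \<le> real t"
        unfolding C_def by (simp add: field_simps add_pos_nonneg)
      then show ?thesis unfolding K_def t_def .
    qed
  qed
  then show ?thesis using C by blast
qed

lemma part2:
  shows "\<exists>C>0. \<exists>N. \<forall>n\<ge>N. \<forall>f E. E \<subseteq> cube n \<longrightarrow>
            kappa1 n f E \<le> c * sqrt (kappa0 E) \<longrightarrow>
            real (BQC n f) \<ge> C * (log 2 (kappa1 n f E) /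
               (log 2 (sqrt (kappa0 E)) - log 2 (kappa1 n f E) + 1))"
proof -
  define C :: real where "C = 1 / 145"
  have "\<forall>n\<ge>0. \<forall>f E. E \<subseteq> cube n \<longrightarrow>
            kappa1 n f E \<le> c * sqrt (kappa0 E) \<longrightarrow>
            real (BQC n f) \<ge> C * (log 2 (kappa1 n f E) /
               (log 2 (sqrt (kappa0 E)) - log 2 (kappa1 n f E) + 1))"
  proof (intro allI impI)
    fix n f E assume E: "E \<subseteq> cube n"
    define K where "K = kappa1 n f E"
    define t where "t = BQC n f"
    define R where "R = sqrt (kappa0 E)"
    have K0: "0 \<le> K" unfolding K_def by (rule kappa_nonneg)
    have KR: "K \<le> R" unfolding K_def R_def by (rule kappa_le_sqrt[OF E])
    have goal: "C * (log 2 K / (log 2 R - log 2 K + 1)) \<le> real t"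
    proof (cases "K \<le> 1")
      case True
      show ?thesis
      proof (cases "K = 0")
        case True then show ?thesis by (simp add: log_def)
      next
        case False
        then have Kp: "0 < K" using K0 by simp
        have "log 2 K \<le> log 2 R" using Kp KR by (intro log_mono) auto
        then have D: "0 < log 2 R - log 2 K + 1" by simp
        have "log 2 K \<le> 0" using True Kp by simp
        then have "log 2 K / (log 2 R - log 2 K + 1) \<le> 0" using D by (simp add: divide_nonpos_pos)
        then have "C * (log 2 K / (log 2 R - log 2 K + 1)) \<le> 0"
          by (intro mult_nonneg_nonpos) (auto simp: C_def)
        then show ?thesis by linarith
      qed
    next
      case False
      then have K1: "1 < K" by simp
      have t1: "1 \<le> t"
      proof (rule ccontr)
        assume "\<not> 1 \<le> t"
        then have "BQC n f = 0" unfolding t_def by simp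
        then have "K \<le> 1" unfolding K_def by (rule t0_bound[OF E])
        then show False using K1 by simp
      qed
      define u where "u = log 2 R - log 2 K"
      have u0: "0 \<le> u" unfolding u_def using K1 KR by (simp add: log_mono)
      define s where "s = nat \<lceil>u\<rceil> + 1"
      have s1: "u + 1 \<le> real s" unfolding s_def using u0 by linarith
      have s2: "real s \<le> u + 2" unfolding s_def using u0 by linarith
      have Rp: "0 < R" using K1 KR by simp
      have "R / 2 ^ s = 2 powr (log 2 R - real s)"
        using Rp by (simp add: powr_diff powr_realpow)
      also have "\<dots> \<le> 2 powr (log 2 K - 1)"
        using s1 unfolding u_def by (intro powr_mono) auto
      also have "\<dots> = K / 2" using K1 by (simp add: powr_diff)
      finally have b1: "R / 2 ^ s \<le> K / 2" .
      have "K \<le> 2 ^ (36 * (t + 1) * s) + R / 2 ^ s"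
        using main_bound[OF E, of f s] unfolding K_def t_def R_def .
      then have "K \<le> 2 * 2 ^ (36 * (t + 1) * s)" using b1 by linarith
      then have kb: "K \<le> 2 ^ (36 * (t + 1) * s + 1)" by (simp add: power_add)
      have L: "log 2 K \<le> real (36 * (t + 1) * s + 1)"
        by (rule log_le_nat[OF _ kb]) (use K1 in simp)
      have "real (36 * (t + 1) * s + 1) = 36 * (real t + 1) * real s + 1" by simp
      also have "\<dots> \<le> 36 * (real t + 1) * (u + 2) + 1"
        using s2 by (intro add_right_mono mult_left_mono) auto
      also have "\<dots> \<le> (72 * real t + 73) * (u + 1)"
      proof -
        have e1: "72 * (real t + 1) * (u + 1) - 36 * (real t + 1) * (u + 2) = 36 * ((real t + 1) * u)"
          by (simp add: algebra_simps)
        have e2: "(72 * real t + 73) * (u + 1) = 72 * (real t + 1) * (u + 1) + (u + 1)"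
          by (simp add: algebra_simps)
        have "0 \<le> (real t + 1) * u" using u0 by simp
        then show ?thesis using e1 e2 u0 by linarith
      qed
      also have "\<dots> \<le> (145 * real t) * (u + 1)"
        using t1 u0 by (intro mult_right_mono) auto
      finally have "log 2 K \<le> (145 * real t) * (u + 1)" using L by linarith
      then have "log 2 K / (u + 1) \<le> 145 * real t"
        using u0 by (simp add: divide_le_eq)
      then have "C * (log 2 K / (u + 1)) \<le> real t" unfolding C_def by linarith
      then show ?thesis unfolding u_def by (simp add: algebra_simps)
    qed
    then show "real (BQC n f) \<ge> C * (log 2 (kappa1 n f E) /
               (log 2 (sqrt (kappa0 E)) - log 2 (kappa1 n f E) + 1))"
      unfolding K_def t_def R_def .
  qed
  moreover have "C > 0" unfolding C_def by simp
  ultimately show ?thesis by blast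
qed

theorem theorem4p1:
  shows "(\<forall>c>0. \<exists>C>0. \<exists>N. \<forall>n\<ge>N. \<forall>f E. E \<subseteq> cube n \<longrightarrow>
            kappa1 n f E \<ge> c * sqrt (kappa0 E) \<longrightarrow>
            real (BQC n f) \<ge> C * log 2 (kappa1 n f E))
       \<and> (\<forall>c>0. \<exists>C>0. \<exists>N. \<forall>n\<ge>N. \<forall>f E. E \<subseteq> cube n \<longrightarrow>
            kappa1 n f E \<le> c * sqrt (kappa0 E) \<longrightarrow>
            real (BQC n f) \<ge> C * (log 2 (kappa1 n f E) /
               (log 2 (sqrt (kappa0 E)) - log 2 (kappa1 n f E) + 1)))"
  using part1 part2 by blast


end
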